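(* Let $\Omega$ be a set, let $n\ge 1$, and let $H_1,\ldots,H_n$ and $G$ be subgroups of $\mathrm{Sym}(\Omega)$ such that the $n$-tuple $(H_1,\ldots,H_n)$ is confined by $G$. Let $P\subset \mathrm{Sym}(\Omega)$ be a confining subset for $(H_1,\ldots,H_n,G)$ and let $r=|P|$. Assume that $\{\Omega_\sigma\}_{\sigma\in P}$ is a displacement configuration for $P$ such that for every $\sigma\in P$ the group $\mathrm{Rist}_G(\Omega_\sigma)$ is non-trivial and satisfies $\mathrm{FC}_{\leqslant nr}(\mathrm{Rist}_G(\Omega_\sigma))=\{1\}$. Then there exist $\rho\in P$ and $k\le n$ such that $H_k$ contains a non-trivial subgroup $N\le \mathrm{Rist}_G(\Omega_\rho)$ whose normalizer in $\mathrm{Rist}_G(\Omega_\rho)$ has index at most $nr$ in $\mathrm{Rist}_G(\Omega_\rho)$.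
   Context: For subgroups $H_1,\ldots,H_n,G$ of a group $L$, the $n$-tuple $(H_1,\ldots,H_n)$ is confined by $G$ if there exists a finite subset $P$ of non-trivial elements of $L$ such that for every $g\in G$ there exists $j$ with $gH_jg^{-1}\cap P\neq\varnothing$; such a $P$ is called a confining subset for $(H_1,\ldots,H_n,G)$. Here $L=\mathrm{Sym}(\Omega)$, the group of all permutations of $\Omega$. For $\Sigma\subset\Omega$, the rigid stabilizer $\mathrm{Rist}_G(\Sigma)$ is the set of elements of $G$ fixing every point of $\Omega\setminus\Sigma$. For a group $K$ and $m\ge1$, $\mathrm{FC}_{\leqslant m}(K)$ is the set of elements of $K$ whose conjugacy class in $K$ has cardinality at most $m$. If $P$ is a finite set of non-trivial elements of $\mathrm{Sym}(\Omega)$, a collection $\{\Omega_\sigma\}_{\sigma\in P}$ of non-empty subsets of $\Omega$ is a displacement configuration for $P$ if: (C1) for all $\sigma,\rho\in P$, either $\Omega_\sigma=\Omega_\rho$ or $\Omega_\sigma\cap\Omega_\rho=\varnothing$; (C3) for all $\sigma,\rho\in P$, either $\sigma$ fixes $\Omega_\rho$ pointwise, or $\sigma(\Omega_\rho)$ is disjoint from $\bigcup_{\alpha\in P}\Omega_\alpha$; (C4) for all $\sigma\in P$, $\sigma(\Omega_\sigma)$ is disjoint from $\bigcup_{\alpha\in P}\Omega_\alpha$ and from $\bigcup_{\alpha\in P}\sigma^{-1}(\Omega_\alpha)$. *)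

theory Defs
  imports "HOL-Algebra.Bij" "HOL-Algebra.Coset"
begin

text \<open>Sym(Omega) is rendered as the HOL-Algebra group BijGroup Omega (extensional bijections of Omega).\<close>

definition conj_set :: "'a set \<Rightarrow> ('a \<Rightarrow> 'a) \<Rightarrow> ('a \<Rightarrow> 'a) set \<Rightarrow> ('a \<Rightarrow> 'a) set" where
  "conj_set \<Omega> g H = {g \<otimes>\<^bsub>BijGroup \<Omega>\<^esub> h \<otimes>\<^bsub>BijGroup \<Omega>\<^esub> inv\<^bsub>BijGroup \<Omega>\<^esub> g | h. h \<in> H}"

definition confining_subset ::
  "'a set \<Rightarrow> nat \<Rightarrow> (nat \<Rightarrow> ('a \<Rightarrow> 'a) set) \<Rightarrow> ('a \<Rightarrow> 'a) set \<Rightarrow> ('a \<Rightarrow> 'a) set \<Rightarrow> bool" where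
  "confining_subset \<Omega> n H G P \<longleftrightarrow>
     finite P \<and> P \<subseteq> carrier (BijGroup \<Omega>) - {\<one>\<^bsub>BijGroup \<Omega>\<^esub>} \<and>
     (\<forall>g\<in>G. \<exists>j\<in>{1..n}. conj_set \<Omega> g (H j) \<inter> P \<noteq> {})"

definition confined_by ::
  "'a set \<Rightarrow> nat \<Rightarrow> (nat \<Rightarrow> ('a \<Rightarrow> 'a) set) \<Rightarrow> ('a \<Rightarrow> 'a) set \<Rightarrow> bool" where
  "confined_by \<Omega> n H G \<longleftrightarrow> (\<exists>P. confining_subset \<Omega> n H G P)"

definition Rist :: "'a set \<Rightarrow> ('a \<Rightarrow> 'a) set \<Rightarrow> 'a set \<Rightarrow> ('a \<Rightarrow> 'a) set" where
  "Rist \<Omega> G \<Sigma> = {g \<in> G. \<forall>x \<in> \<Omega> - \<Sigma>. g x = x}"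

definition FC_le :: "'a set \<Rightarrow> nat \<Rightarrow> ('a \<Rightarrow> 'a) set \<Rightarrow> ('a \<Rightarrow> 'a) set" where
  "FC_le \<Omega> m K = {x \<in> K. finite {g \<otimes>\<^bsub>BijGroup \<Omega>\<^esub> x \<otimes>\<^bsub>BijGroup \<Omega>\<^esub> inv\<^bsub>BijGroup \<Omega>\<^esub> g | g. g \<in> K}
                      \<and> card {g \<otimes>\<^bsub>BijGroup \<Omega>\<^esub> x \<otimes>\<^bsub>BijGroup \<Omega>\<^esub> inv\<^bsub>BijGroup \<Omega>\<^esub> g | g. g \<in> K} \<le> m}"

definition normalizer_in :: "'a set \<Rightarrow> ('a \<Rightarrow> 'a) set \<Rightarrow> ('a \<Rightarrow> 'a) set \<Rightarrow> ('a \<Rightarrow> 'a) set" where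
  "normalizer_in \<Omega> K N = {g \<in> K. conj_set \<Omega> g N = N}"

definition index_le :: "'a set \<Rightarrow> ('a \<Rightarrow> 'a) set \<Rightarrow> ('a \<Rightarrow> 'a) set \<Rightarrow> nat \<Rightarrow> bool" where
  "index_le \<Omega> K A m \<longleftrightarrow>
     finite (rcosets\<^bsub>(BijGroup \<Omega>)\<lparr>carrier := K\<rparr>\<^esub> A) \<and>
     card (rcosets\<^bsub>(BijGroup \<Omega>)\<lparr>carrier := K\<rparr>\<^esub> A) \<le> m"

text \<open>Displacement configuration (conditions C1, C3, C4).\<close>
definition displacement_configuration ::
  "'a set \<Rightarrow> ('a \<Rightarrow> 'a) set \<Rightarrow> (('a \<Rightarrow> 'a) \<Rightarrow> 'a set) \<Rightarrow> bool" where
  "displacement_configuration \<Omega> P W \<longleftrightarrow>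
     (\<forall>\<sigma>\<in>P. W \<sigma> \<noteq> {} \<and> W \<sigma> \<subseteq> \<Omega>) \<and>
     (\<forall>\<sigma>\<in>P. \<forall>\<rho>\<in>P. W \<sigma> = W \<rho> \<or> W \<sigma> \<inter> W \<rho> = {}) \<and>
     (\<forall>\<sigma>\<in>P. \<forall>\<rho>\<in>P. (\<forall>x\<in>W \<rho>. \<sigma> x = x) \<or> \<sigma> ` W \<rho> \<inter> (\<Union>\<alpha>\<in>P. W \<alpha>) = {}) \<and>
     (\<forall>\<sigma>\<in>P. \<sigma> ` W \<sigma> \<inter> (\<Union>\<alpha>\<in>P. W \<alpha>) = {} \<and>
             \<sigma> ` W \<sigma> \<inter> (\<Union>\<alpha>\<in>P. (inv\<^bsub>BijGroup \<Omega>\<^esub> \<sigma>) ` W \<alpha>) = {})"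

end

theory Submission
  imports Defs
begin


definition fin_idx :: "('g, 'b) monoid_scheme \<Rightarrow> 'g set \<Rightarrow> 'g set \<Rightarrow> bool" where
  "fin_idx G K B \<longleftrightarrow> (\<exists>C. C \<subseteq> K \<and> finite C \<and> K \<subseteq> (\<Union>c\<in>C. c <#\<^bsub>G\<^esub> B))"

definition cov_le :: "('g, 'b) monoid_scheme \<Rightarrow> 'g set \<Rightarrow> 'g set \<Rightarrow> nat \<Rightarrow> bool" where
  "cov_le G K B k \<longleftrightarrow> (\<exists>C. C \<subseteq> K \<and> finite C \<and> card C \<le> k \<and> K \<subseteq> (\<Union>c\<in>C. c <#\<^bsub>G\<^esub> B))"

context group
begin

lemma lcos_mem_iff:
  assumes "subgroup A G" "c \<in> carrier G" "x \<in> carrier G"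
  shows "(x \<in> c <# A) = (inv c \<otimes> x \<in> A)"
proof
  assume "x \<in> c <# A"
  then obtain a where a: "a \<in> A" "x = c \<otimes> a" unfolding l_coset_def by auto
  have "a \<in> carrier G" using a assms(1) subgroup.subset by blast
  then have "inv c \<otimes> x = a" using a assms by (simp add: m_assoc[symmetric])
  then show "inv c \<otimes> x \<in> A" using a by simp
next
  assume h: "inv c \<otimes> x \<in> A"
  have "c \<otimes> (inv c \<otimes> x) = x" using assms by (simp add: m_assoc[symmetric])
  then show "x \<in> c <# A" using h unfolding l_coset_def by force
qed

lemma lcos_sub:
  assumes "subgroup A G" "c \<in> carrier G"
  shows "c <# A \<subseteq> carrier G"
  using assms subgroup.subset unfolding l_coset_def by fastforce

lemma lcos_memD:
  assumes "subgroup A G" "c \<in> carrier G" "x \<in> c <# A"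
  shows "x \<in> carrier G" "inv c \<otimes> x \<in> A"
  using assms lcos_sub lcos_mem_iff by blast+

lemma lcos_self:
  assumes "subgroup A G" "c \<in> carrier G"
  shows "c \<in> c <# A"
  using assms lcos_mem_iff subgroup.one_closed by fastforce

lemma inv_mult_sym:
  assumes "subgroup A G" "x \<in> carrier G" "y \<in> carrier G" "inv x \<otimes> y \<in> A"
  shows "inv y \<otimes> x \<in> A"
proof -
  have 1: "inv (inv x \<otimes> y) \<in> A" using subgroup.m_inv_closed[OF assms(1) assms(4)] .
  have 2: "inv (inv x \<otimes> y) = inv y \<otimes> inv (inv x)" using assms by (intro inv_mult_group) auto
  have 3: "inv (inv x) = x" using assms(2) by (rule inv_inv)
  show ?thesis using 1 2 3 by simp
qed

lemma cancel_mid: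
  assumes "a \<in> carrier G" "y \<in> carrier G" "b \<in> carrier G"
  shows "(a \<otimes> y) \<otimes> (inv y \<otimes> b) = a \<otimes> b"
proof -
  have "(a \<otimes> y) \<otimes> (inv y \<otimes> b) = a \<otimes> (y \<otimes> (inv y \<otimes> b))" using assms by (simp add: m_assoc)
  also have "y \<otimes> (inv y \<otimes> b) = b" using assms by (simp add: m_assoc[symmetric])
  finally show ?thesis .
qed


lemma inv_mult_trans:
  assumes "subgroup A G" "x \<in> carrier G" "y \<in> carrier G" "z \<in> carrier G"
    "inv x \<otimes> y \<in> A" "inv y \<otimes> z \<in> A"
  shows "inv x \<otimes> z \<in> A"
proof -
  have 1: "(inv x \<otimes> y) \<otimes> (inv y \<otimes> z) \<in> A" using subgroup.m_closed[OF assms(1) assms(5) assms(6)] .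
  have 2: "(inv x \<otimes> y) \<otimes> (inv y \<otimes> z) = inv x \<otimes> z"
    using assms by (intro cancel_mid) auto
  show ?thesis using 1 2 by simp
qed

lemma weak_neumann:
  assumes K: "subgroup K G"
  shows "finite CS \<Longrightarrow> (\<forall>(c,B)\<in>CS. c \<in> K \<and> subgroup B G \<and> B \<subseteq> K \<and> \<not> fin_idx G K B)
    \<Longrightarrow> \<not> K \<subseteq> (\<Union>(c,B)\<in>CS. c <# B)"
proof (induction "card (snd ` CS)" arbitrary: CS rule: less_induct)
  case less
  note fin = less.prems(1) and hyp = less.prems(2)
  have Kc: "K \<subseteq> carrier G" using K subgroup.subset by blast
  show ?case
  proof
    assume cov: "K \<subseteq> (\<Union>(c,B)\<in>CS. c <# B)"
    have "\<one> \<in> K" using K subgroup.one_closed by blast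
    then have "CS \<noteq> {}" using cov by auto
    then obtain c0 B where cB: "(c0,B) \<in> CS" by auto
    define CB where "CB = {c. (c,B) \<in> CS}"
    have CBeq: "CB = fst ` (CS \<inter> {p. snd p = B})" unfolding CB_def by force
    have finCB: "finite CB" unfolding CBeq using fin by simp
    have CBK: "CB \<subseteq> K" using hyp unfolding CB_def by auto
    have Bsg: "subgroup B G" and BK: "B \<subseteq> K" and nfi: "\<not> fin_idx G K B" using hyp cB by auto
    have "\<not> K \<subseteq> (\<Union>c\<in>CB. c <# B)" using nfi finCB CBK unfolding fin_idx_def by blast
    then obtain x where x: "x \<in> K" "x \<notin> (\<Union>c\<in>CB. c <# B)" by blast
    have xc: "x \<in> carrier G" using x Kc by blast
    define CS1 where "CS1 = (\<lambda>(y,(c',B')). (y \<otimes> inv x \<otimes> c', B')) ` (CB \<times> {p\<in>CS. snd p \<noteq> B})"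
    define CS' where "CS' = CS1 \<union> {p\<in>CS. snd p \<noteq> B}"
    have finCS': "finite CS'" unfolding CS'_def CS1_def using fin finCB by auto
    have sndsub: "snd ` CS' \<subseteq> snd ` CS - {B}"
    proof
      fix B' assume "B' \<in> snd ` CS'"
      then obtain p where p: "p \<in> CS'" "B' = snd p" by blast
      show "B' \<in> snd ` CS - {B}"
      proof (cases "p \<in> CS1")
        case True
        then obtain yq where yq: "yq \<in> CB \<times> {p\<in>CS. snd p \<noteq> B}"
          "p = (\<lambda>(y,(c',B')). (y \<otimes> inv x \<otimes> c', B')) yq"
          unfolding CS1_def by (rule imageE)
        obtain y c' B'' where "yq = (y,(c',B''))" by (cases yq) auto
        then show ?thesis using p yq by (auto intro: image_eqI[where x="(c',B'')"])
      next
        case False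
        then show ?thesis using p unfolding CS'_def by auto
      qed
    qed
    have Bin: "B \<in> snd ` CS" using cB by (metis image_eqI snd_conv)
    have lt: "card (snd ` CS') < card (snd ` CS)"
    proof -
      have "B \<notin> snd ` CS'" using sndsub by auto
      then have "snd ` CS' \<noteq> snd ` CS" using Bin by metis
      then have "snd ` CS' \<subset> snd ` CS" using sndsub by auto
      moreover have "finite (snd ` CS)" using fin by (rule finite_imageI)
      ultimately show ?thesis by (rule psubset_card_mono[rotated])
    qed
    have hyp': "\<forall>(c,B')\<in>CS'. c \<in> K \<and> subgroup B' G \<and> B' \<subseteq> K \<and> \<not> fin_idx G K B'"
    proof
      fix p assume p: "p \<in> CS'"
      show "case p of (c,B') \<Rightarrow> c \<in> K \<and> subgroup B' G \<and> B' \<subseteq> K \<and> \<not> fin_idx G K B'"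
      proof (cases "p \<in> CS1")
        case True
        then obtain yq where yq: "yq \<in> CB \<times> {p\<in>CS. snd p \<noteq> B}"
          "p = (\<lambda>(y,(c',B')). (y \<otimes> inv x \<otimes> c', B')) yq"
          unfolding CS1_def by (rule imageE)
        obtain y c' B' where "yq = (y,(c',B'))" by (cases yq) auto
        then have "y \<in> CB" "(c',B') \<in> CS" "B' \<noteq> B" "p = (y \<otimes> inv x \<otimes> c', B')" using yq by auto
        moreover have "y \<otimes> inv x \<otimes> c' \<in> K"
        proof -
          have "y \<in> K" "c' \<in> K" using \<open>y \<in> CB\<close> CBK hyp \<open>(c',B') \<in> CS\<close> by auto
          then show ?thesis using subgroup.m_closed[OF K] subgroup.m_inv_closed[OF K x(1)] by blast
        qed
        ultimately show ?thesis using hyp by auto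
      next
        case False
        then show ?thesis using p hyp unfolding CS'_def by auto
      qed
    qed
    have cov': "K \<subseteq> (\<Union>(c,B')\<in>CS'. c <# B')"
    proof
      fix z assume z: "z \<in> K"
      then obtain c B' where cB': "(c,B') \<in> CS" "z \<in> c <# B'" using cov by auto
      show "z \<in> (\<Union>(c,B')\<in>CS'. c <# B')"
      proof (cases "B' = B")
        case False
        then have "(c,B') \<in> CS'" using cB' unfolding CS'_def by auto
        then show ?thesis using cB' by auto
      next
        case True
        have cCB: "c \<in> CB" using cB' True unfolding CB_def by auto
        have cc: "c \<in> carrier G" using cCB CBK Kc by blast
        obtain b where b: "b \<in> B" "z = c \<otimes> b" using cB' True unfolding l_coset_def by auto
        have bc: "b \<in> carrier G" using b Bsg subgroup.subset by blast
        have "b \<in> K" using b BK by blast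
        then have xbK: "x \<otimes> b \<in> K" using subgroup.m_closed[OF K x(1)] by blast
        then obtain c' B'' where cB'': "(c',B'') \<in> CS" "x \<otimes> b \<in> c' <# B''" using cov by auto
        have c'K: "c' \<in> K" and B''sg: "subgroup B'' G" using hyp cB'' by auto
        have c'c: "c' \<in> carrier G" using c'K Kc by blast
        have "B'' \<noteq> B"
        proof
          assume eq: "B'' = B"
          then have "c' \<in> CB" using cB'' unfolding CB_def by auto
          have "inv c' \<otimes> (x \<otimes> b) \<in> B" using lcos_memD[OF Bsg c'c] cB'' eq by auto
          then have "(inv c' \<otimes> (x \<otimes> b)) \<otimes> inv b \<in> B" using subgroup.m_closed[OF Bsg _ subgroup.m_inv_closed[OF Bsg b(1)]] by blast
          moreover have "(inv c' \<otimes> (x \<otimes> b)) \<otimes> inv b = inv c' \<otimes> x"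
            using c'c xc bc by (simp add: m_assoc)
          ultimately have "x \<in> c' <# B" using lcos_mem_iff[OF Bsg c'c xc] by simp
          then show False using x \<open>c' \<in> CB\<close> by blast
        qed
        obtain b'' where b'': "b'' \<in> B''" "x \<otimes> b = c' \<otimes> b''" using cB'' unfolding l_coset_def by auto
        have "z = (c \<otimes> inv x \<otimes> c') \<otimes> b''"
        proof -
          have "c \<otimes> inv x \<otimes> (inv (inv x) \<otimes> b) = c \<otimes> b" using cc xc bc by (intro cancel_mid) auto
          then have "z = c \<otimes> inv x \<otimes> (x \<otimes> b)" using b xc by (simp only: inv_inv)
          also have "\<dots> = c \<otimes> inv x \<otimes> (c' \<otimes> b'')" using b'' by simp
          also have "\<dots> = (c \<otimes> inv x \<otimes> c') \<otimes> b''"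
          proof -
            have "b'' \<in> carrier G" using b''(1) subgroup.subset[OF B''sg] by blast
            then show ?thesis using cc xc c'c by (simp add: m_assoc)
          qed
          finally show ?thesis .
        qed
        then have "z \<in> (c \<otimes> inv x \<otimes> c') <# B''" using b'' unfolding l_coset_def by auto
        moreover have "(c \<otimes> inv x \<otimes> c', B'') \<in> CS'"
          unfolding CS'_def CS1_def using cCB cB'' \<open>B'' \<noteq> B\<close> by force
        ultimately show ?thesis by blast
      qed
    qed
    have "\<not> K \<subseteq> (\<Union>(c,B')\<in>CS'. c <# B')" by (rule less.hyps[OF lt finCS' hyp'])
    then show False using cov' by contradiction
  qed
qed

end


context group
begin

lemma greedy_sep:
  assumes ext: "\<And>Y. Y \<subseteq> K \<Longrightarrow> finite Y \<Longrightarrow> card Y < k \<Longrightarrow> \<exists>z\<in>K - Y. \<forall>y\<in>Y. \<forall>A\<in>S. inv y \<otimes> z \<notin> A"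
    and symm: "\<And>A y z. A \<in> S \<Longrightarrow> y \<in> K \<Longrightarrow> z \<in> K \<Longrightarrow> inv y \<otimes> z \<in> A \<Longrightarrow> inv z \<otimes> y \<in> A"
  shows "\<exists>Y \<subseteq> K. finite Y \<and> card Y = k \<and> (\<forall>y\<in>Y. \<forall>y'\<in>Y. \<forall>A\<in>S. inv y \<otimes> y' \<in> A \<longrightarrow> y = y')"
  using ext
proof (induction k)
  case 0
  then show ?case by (intro exI[of _ "{}"]) auto
next
  case (Suc k)
  have "\<exists>Y \<subseteq> K. finite Y \<and> card Y = k \<and> (\<forall>y\<in>Y. \<forall>y'\<in>Y. \<forall>A\<in>S. inv y \<otimes> y' \<in> A \<longrightarrow> y = y')"
    using Suc.prems by (intro Suc.IH) auto
  then obtain Y where Y: "Y \<subseteq> K" "finite Y" "card Y = k"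
    "\<forall>y\<in>Y. \<forall>y'\<in>Y. \<forall>A\<in>S. inv y \<otimes> y' \<in> A \<longrightarrow> y = y'" by blast
  obtain z where z: "z \<in> K - Y" "\<forall>y\<in>Y. \<forall>A\<in>S. inv y \<otimes> z \<notin> A"
    using Suc.prems[OF Y(1,2)] Y(3) by auto
  have "\<forall>y\<in>insert z Y. \<forall>y'\<in>insert z Y. \<forall>A\<in>S. inv y \<otimes> y' \<in> A \<longrightarrow> y = y'"
  proof (intro ballI impI)
    fix y y' A assume yy: "y \<in> insert z Y" "y' \<in> insert z Y" "A \<in> S" "inv y \<otimes> y' \<in> A"
    show "y = y'"
    proof (cases "y = z")
      case True
      show ?thesis
      proof (cases "y' = z")
        case False
        then have "y' \<in> Y" using yy by auto
        have "y \<in> K" "y' \<in> K" using yy True z(1) Y(1) \<open>y' \<in> Y\<close> by auto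
        then have "inv y' \<otimes> y \<in> A" using symm[OF yy(3) _ _ yy(4)] by blast
        then have "inv y' \<otimes> z \<in> A" using True by simp
        then show ?thesis using z(2) \<open>y' \<in> Y\<close> yy(3) by blast
      qed (use True in auto)
    next
      case False
      then have yY: "y \<in> Y" using yy by auto
      show ?thesis
      proof (cases "y' = z")
        case True
        then show ?thesis using z(2) yY yy by blast
      next
        case False
        then show ?thesis using Y(4) yY yy by auto
      qed
    qed
  qed
  then show ?case using Y z by (intro exI[of _ "insert z Y"]) auto
qed

lemma distinct_cosets:
  assumes K: "subgroup K G" and A: "subgroup A G" "A \<subseteq> K" and ncov: "\<not> cov_le G K A m"
  shows "\<exists>Y \<subseteq> K. finite Y \<and> card Y = Suc m \<and> (\<forall>y\<in>Y. \<forall>y'\<in>Y. inv y \<otimes> y' \<in> A \<longrightarrow> y = y')"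
proof -
  have Kc: "K \<subseteq> carrier G" using K subgroup.subset by blast
  have "\<exists>Y \<subseteq> K. finite Y \<and> card Y = Suc m \<and> (\<forall>y\<in>Y. \<forall>y'\<in>Y. \<forall>A'\<in>{A}. inv y \<otimes> y' \<in> A' \<longrightarrow> y = y')"
  proof (rule greedy_sep)
    fix Y assume Y: "Y \<subseteq> K" "finite Y" "card Y < Suc m"
    have "\<not> K \<subseteq> (\<Union>c\<in>Y. c <# A)" using ncov Y unfolding cov_le_def by auto
    then obtain z where z: "z \<in> K" "z \<notin> (\<Union>c\<in>Y. c <# A)" by blast
    have "\<forall>y\<in>Y. inv y \<otimes> z \<notin> A"
    proof
      fix y assume "y \<in> Y"
      then have "y \<in> carrier G" "z \<in> carrier G" "z \<notin> y <# A" using z Y(1) Kc by auto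
      then show "inv y \<otimes> z \<notin> A" using lcos_mem_iff[OF A(1)] by blast
    qed
    moreover have "z \<notin> Y"
    proof
      assume "z \<in> Y"
      then have "z \<in> z <# A" using lcos_self[OF A(1)] Y(1) Kc by blast
      then show False using z \<open>z \<in> Y\<close> by blast
    qed
    ultimately show "\<exists>z\<in>K - Y. \<forall>y\<in>Y. \<forall>A'\<in>{A}. inv y \<otimes> z \<notin> A'" using z by blast
  next
    fix A' y z assume "A' \<in> {A}" "y \<in> K" "z \<in> K" "inv y \<otimes> z \<in> A'"
    then show "inv z \<otimes> y \<in> A'" using inv_mult_sym[OF A(1), of y z] Kc by blast
  qed
  then show ?thesis by auto
qed

lemma fin_idx_self:
  assumes K: "subgroup K G"
  shows "fin_idx G K K"
proof -
  have "K \<subseteq> \<one> <# K" using K subgroup.subset unfolding l_coset_def by fastforce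
  then show ?thesis unfolding fin_idx_def using K subgroup.one_closed
    by (intro exI[of _ "{\<one>}"]) auto
qed

lemma fin_idx_Int:
  assumes K: "subgroup K G" and A: "subgroup A G" "A \<subseteq> K" and B: "subgroup B G" "B \<subseteq> K"
    and fA: "fin_idx G K A" and fB: "fin_idx G K B"
  shows "fin_idx G K (A \<inter> B)"
proof -
  have Kc: "K \<subseteq> carrier G" using K subgroup.subset by blast
  have AB: "subgroup (A \<inter> B) G" using A(1) B(1) by (rule subgroups_Inter_pair)
  obtain C1 where C1: "C1 \<subseteq> K" "finite C1" "K \<subseteq> (\<Union>c\<in>C1. c <# A)" using fA unfolding fin_idx_def by blast
  obtain C2 where C2: "C2 \<subseteq> K" "finite C2" "K \<subseteq> (\<Union>c\<in>C2. c <# B)" using fB unfolding fin_idx_def by blast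
  define P where "P = {(c1,c2). c1 \<in> C1 \<and> c2 \<in> C2 \<and> (\<exists>e\<in>K. inv c1 \<otimes> e \<in> A \<and> inv c2 \<otimes> e \<in> B)}"
  define ef where "ef = (\<lambda>(c1,c2). SOME e. e \<in> K \<and> inv c1 \<otimes> e \<in> A \<and> inv c2 \<otimes> e \<in> B)"
  have finP: "finite P" using C1 C2 unfolding P_def by (auto intro: finite_subset[of _ "C1 \<times> C2"])
  have efP: "\<And>p. p \<in> P \<Longrightarrow> ef p \<in> K \<and> inv (fst p) \<otimes> ef p \<in> A \<and> inv (snd p) \<otimes> ef p \<in> B"
  proof -
    fix p assume "p \<in> P"
    then obtain c1 c2 where p: "p = (c1,c2)" "\<exists>e\<in>K. inv c1 \<otimes> e \<in> A \<and> inv c2 \<otimes> e \<in> B" unfolding P_def by auto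
    then show "ef p \<in> K \<and> inv (fst p) \<otimes> ef p \<in> A \<and> inv (snd p) \<otimes> ef p \<in> B"
      unfolding ef_def p by (auto intro: someI2_ex)
  qed
  show ?thesis unfolding fin_idx_def
  proof (intro exI conjI)
    show "ef ` P \<subseteq> K" using efP by auto
    show "finite (ef ` P)" using finP by simp
    show "K \<subseteq> (\<Union>c\<in>ef ` P. c <# (A \<inter> B))"
    proof
      fix z assume z: "z \<in> K"
      then have zc: "z \<in> carrier G" using Kc by blast
      obtain c1 where c1: "c1 \<in> C1" "z \<in> c1 <# A" using C1 z by blast
      obtain c2 where c2: "c2 \<in> C2" "z \<in> c2 <# B" using C2 z by blast
      have c1c: "c1 \<in> carrier G" and c2c: "c2 \<in> carrier G" using c1 c2 C1 C2 Kc by blast+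
      have z1: "inv c1 \<otimes> z \<in> A" using lcos_mem_iff[OF A(1) c1c zc] c1 by blast
      have z2: "inv c2 \<otimes> z \<in> B" using lcos_mem_iff[OF B(1) c2c zc] c2 by blast
      have pP: "(c1,c2) \<in> P" unfolding P_def using c1 c2 z z1 z2 by blast
      define e where "e = ef (c1,c2)"
      have e: "e \<in> K" "inv c1 \<otimes> e \<in> A" "inv c2 \<otimes> e \<in> B" using efP[OF pP] unfolding e_def by auto
      have ec: "e \<in> carrier G" using e Kc by blast
      have "inv e \<otimes> c1 \<in> A" using inv_mult_sym[OF A(1) c1c ec e(2)] .
      then have "inv e \<otimes> z \<in> A" using inv_mult_trans[OF A(1) ec c1c zc _ z1] by simp
      moreover have "inv e \<otimes> c2 \<in> B" using inv_mult_sym[OF B(1) c2c ec e(3)] .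
      then have "inv e \<otimes> z \<in> B" using inv_mult_trans[OF B(1) ec c2c zc _ z2] by simp
      ultimately have "z \<in> e <# (A \<inter> B)" using lcos_mem_iff[OF AB ec zc] by blast
      then show "z \<in> (\<Union>c\<in>ef ` P. c <# (A \<inter> B))" using pP unfolding e_def by blast
    qed
  qed
qed

lemma fin_idx_Inter:
  assumes K: "subgroup K G"
  shows "finite I \<Longrightarrow> (\<forall>A\<in>I. subgroup A G \<and> A \<subseteq> K \<and> fin_idx G K A) \<Longrightarrow>
    subgroup (K \<inter> \<Inter>I) G \<and> fin_idx G K (K \<inter> \<Inter>I)"
proof (induction rule: finite_induct)
  case empty
  then show ?case using K fin_idx_self[OF K] by simp
next
  case (insert A I)
  have eq: "K \<inter> \<Inter>(insert A I) = A \<inter> (K \<inter> \<Inter>I)" using insert.prems by auto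
  have IH: "subgroup (K \<inter> \<Inter>I) G" "fin_idx G K (K \<inter> \<Inter>I)" using insert by auto
  have A: "subgroup A G" "A \<subseteq> K" "fin_idx G K A" using insert.prems by auto
  show ?case unfolding eq
    using subgroups_Inter_pair[OF A(1) IH(1)] fin_idx_Int[OF K A(1,2) IH(1) _ A(3) IH(2)] by auto
qed

lemma fin_idx_trans:
  assumes K: "subgroup K G" and D: "subgroup D G" "D \<subseteq> K" "fin_idx G K D"
    and A: "subgroup A G" and fDA: "fin_idx G D (D \<inter> A)"
  shows "fin_idx G K A"
proof -
  have Kc: "K \<subseteq> carrier G" using K subgroup.subset by blast
  have DA: "subgroup (D \<inter> A) G" using D(1) A by (rule subgroups_Inter_pair)
  obtain C1 where C1: "C1 \<subseteq> K" "finite C1" "K \<subseteq> (\<Union>c\<in>C1. c <# D)" using D(3) unfolding fin_idx_def by blast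
  obtain C2 where C2: "C2 \<subseteq> D" "finite C2" "D \<subseteq> (\<Union>c\<in>C2. c <# (D \<inter> A))" using fDA unfolding fin_idx_def by blast
  show ?thesis unfolding fin_idx_def
  proof (intro exI conjI)
    let ?C = "(\<lambda>(t,e). t \<otimes> e) ` (C1 \<times> C2)"
    show "?C \<subseteq> K"
    proof
      fix x assume "x \<in> ?C"
      then obtain t e where "t \<in> C1" "e \<in> C2" "x = t \<otimes> e" by auto
      then show "x \<in> K" using C1(1) C2(1) D(2) subgroup.m_closed[OF K, of t e] by auto
    qed
    show "finite ?C" using C1 C2 by simp
    show "K \<subseteq> (\<Union>c\<in>?C. c <# A)"
    proof
      fix z assume z: "z \<in> K"
      then have zc: "z \<in> carrier G" using Kc by blast
      obtain t where t: "t \<in> C1" "z \<in> t <# D" using C1 z by blast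
      have tc: "t \<in> carrier G" using t C1 Kc by blast
      have tz: "inv t \<otimes> z \<in> D" using lcos_mem_iff[OF D(1) tc zc] t by blast
      obtain e where e: "e \<in> C2" "inv t \<otimes> z \<in> e <# (D \<inter> A)" using C2 tz by blast
      have ec: "e \<in> carrier G" using e C2 D(2) Kc by blast
      have "inv t \<otimes> z \<in> carrier G" using tc zc by simp
      then have "inv e \<otimes> (inv t \<otimes> z) \<in> D \<inter> A" using lcos_mem_iff[OF DA ec] e by blast
      then have "inv e \<otimes> (inv t \<otimes> z) \<in> A" by blast
      moreover have "inv e \<otimes> (inv t \<otimes> z) = inv (t \<otimes> e) \<otimes> z"
        using ec tc zc by (simp add: inv_mult_group m_assoc)
      ultimately have "z \<in> (t \<otimes> e) <# A" using lcos_mem_iff[OF A _ zc] tc ec by simp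
      then show "z \<in> (\<Union>c\<in>?C. c <# A)" using t e by blast
    qed
  qed
qed

lemma transversal:
  assumes K: "subgroup K G" and D: "subgroup D G" "D \<subseteq> K" "fin_idx G K D"
  shows "\<exists>T\<subseteq>K. finite T \<and> (\<forall>z\<in>K. \<exists>t\<in>T. inv t \<otimes> z \<in> D) \<and> (\<forall>t\<in>T. \<forall>t'\<in>T. inv t \<otimes> t' \<in> D \<longrightarrow> t = t')"
proof -
  have Kc: "K \<subseteq> carrier G" using K subgroup.subset by blast
  obtain C where C: "C \<subseteq> K" "finite C" "K \<subseteq> (\<Union>c\<in>C. c <# D)" using D(3) unfolding fin_idx_def by blast
  have Cc: "C \<subseteq> carrier G" using C Kc by blast
  define r where "r = (\<lambda>c. SOME t. t \<in> C \<and> inv t \<otimes> c \<in> D)"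
  have r: "\<And>c. c \<in> C \<Longrightarrow> r c \<in> C \<and> inv (r c) \<otimes> c \<in> D"
  proof -
    fix c assume c: "c \<in> C"
    have "inv c \<otimes> c \<in> D" using c Cc subgroup.one_closed[OF D(1)] by auto
    then have "c \<in> C \<and> inv c \<otimes> c \<in> D" using c by blast
    then show "r c \<in> C \<and> inv (r c) \<otimes> c \<in> D" unfolding r_def by (rule someI)
  qed
  have req: "\<And>c c'. c \<in> C \<Longrightarrow> c' \<in> C \<Longrightarrow> inv c \<otimes> c' \<in> D \<Longrightarrow> r c = r c'"
  proof -
    fix c c' assume cc: "c \<in> C" "c' \<in> C" "inv c \<otimes> c' \<in> D"
    have "(\<lambda>t. t \<in> C \<and> inv t \<otimes> c \<in> D) = (\<lambda>t. t \<in> C \<and> inv t \<otimes> c' \<in> D)"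
    proof (rule ext, rule iffI)
      fix t assume "t \<in> C \<and> inv t \<otimes> c \<in> D"
      then show "t \<in> C \<and> inv t \<otimes> c' \<in> D" using inv_mult_trans[OF D(1), of t c c'] cc Cc by blast
    next
      fix t assume t: "t \<in> C \<and> inv t \<otimes> c' \<in> D"
      have "inv c' \<otimes> c \<in> D" using inv_mult_sym[OF D(1), of c c'] cc Cc by blast
      then show "t \<in> C \<and> inv t \<otimes> c \<in> D" using inv_mult_trans[OF D(1), of t c' c] t cc Cc by blast
    qed
    then show "r c = r c'" unfolding r_def by simp
  qed
  show ?thesis
  proof (intro exI conjI)
    show "r ` C \<subseteq> K" using r C by auto
    show "finite (r ` C)" using C by simp
    show "\<forall>z\<in>K. \<exists>t\<in>r ` C. inv t \<otimes> z \<in> D"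
    proof
      fix z assume z: "z \<in> K"
      then obtain c where c: "c \<in> C" "z \<in> c <# D" using C by blast
      have cz: "c \<in> carrier G" "z \<in> carrier G" "r c \<in> carrier G" using c z Cc Kc r[OF c(1)] by auto
      have "inv c \<otimes> z \<in> D" using lcos_mem_iff[OF D(1) cz(1) cz(2)] c by blast
      then have "inv (r c) \<otimes> z \<in> D" using inv_mult_trans[OF D(1) cz(3) cz(1) cz(2)] r[OF c(1)] by blast
      then show "\<exists>t\<in>r ` C. inv t \<otimes> z \<in> D" using c by blast
    qed
    show "\<forall>t\<in>r ` C. \<forall>t'\<in>r ` C. inv t \<otimes> t' \<in> D \<longrightarrow> t = t'"
    proof (intro ballI impI)
      fix t t' assume tt: "t \<in> r ` C" "t' \<in> r ` C" "inv t \<otimes> t' \<in> D"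
      then obtain c c' where c: "c \<in> C" "t = r c" "c' \<in> C" "t' = r c'" by blast
      have cc: "c \<in> carrier G" "t \<in> carrier G" "c' \<in> carrier G" "t' \<in> carrier G"
        using c r Cc by auto
      have h1: "inv c \<otimes> t \<in> D" using inv_mult_sym[OF D(1) cc(2) cc(1)] r[OF c(1)] c by blast
      have h2: "inv t' \<otimes> c' \<in> D" using r[OF c(3)] c by blast
      have "inv c \<otimes> t' \<in> D" using inv_mult_trans[OF D(1) cc(1) cc(2) cc(4) h1 tt(3)] .
      then have "inv c \<otimes> c' \<in> D" using inv_mult_trans[OF D(1) cc(1) cc(4) cc(3) _ h2] by blast
      then show "t = t'" using req c by blast
    qed
  qed
qed

end


context group
begin

lemma pair_cancel:
  assumes c: "t \<in> carrier G" "y \<in> carrier G" "t' \<in> carrier G" "y' \<in> carrier G"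
    and eq: "t \<otimes> y = t' \<otimes> y'"
  shows "inv t \<otimes> t' = y \<otimes> inv y'"
proof -
  have "inv t \<otimes> (t \<otimes> y) \<otimes> inv y' = inv t \<otimes> (t' \<otimes> y') \<otimes> inv y'" using eq by simp
  moreover have "inv t \<otimes> (t \<otimes> y) \<otimes> inv y' = y \<otimes> inv y'" using c by (simp add: m_assoc[symmetric])
  moreover have "inv t \<otimes> (t' \<otimes> y') \<otimes> inv y' = inv t \<otimes> t'" using c by (simp add: m_assoc)
  ultimately show ?thesis by simp
qed

lemma pair_inv_mult:
  assumes c: "t \<in> carrier G" "y \<in> carrier G" "y' \<in> carrier G"
  shows "inv (t \<otimes> y) \<otimes> (t \<otimes> y') = inv y \<otimes> y'"
proof -
  have "inv (t \<otimes> y) = inv y \<otimes> inv t" using c by (intro inv_mult_group) auto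
  then have "inv (t \<otimes> y) \<otimes> (t \<otimes> y') = inv y \<otimes> inv t \<otimes> (t \<otimes> y')" by simp
  also have "\<dots> = inv y \<otimes> y'" using c by (simp add: m_assoc[symmetric]) (simp add: m_assoc)
  finally show ?thesis .
qed

end


context group
begin

lemma lemmaA:
  assumes K: "subgroup K G" and finS: "finite S"
    and S: "\<forall>A\<in>S. subgroup A G \<and> A \<subseteq> K \<and> \<not> cov_le G K A m"
  shows "\<exists>F \<subseteq> K. finite F \<and> F \<noteq> {} \<and> (\<forall>A\<in>S. \<forall>c\<in>K. Suc m * card (F \<inter> (c <# A)) \<le> card F)"
proof -
  have Kc: "K \<subseteq> carrier G" using K subgroup.subset by blast
  define I where "I = {A\<in>S. fin_idx G K A}"
  define J where "J = S - I"
  define D where "D = K \<inter> \<Inter>I"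
  have finI: "finite I" using finS unfolding I_def by simp
  have DI: "subgroup D G \<and> fin_idx G K D" unfolding D_def
    using fin_idx_Inter[OF K finI] S unfolding I_def by blast
  have Dsg: "subgroup D G" and fD: "fin_idx G K D" using DI by auto
  have DK: "D \<subseteq> K" unfolding D_def by blast
  have Dc: "D \<subseteq> carrier G" using DK Kc by blast
  have DA: "\<And>A. A \<in> I \<Longrightarrow> D \<subseteq> A" unfolding D_def by blast
  obtain T where T: "T \<subseteq> K" "finite T" "\<forall>z\<in>K. \<exists>t\<in>T. inv t \<otimes> z \<in> D"
    "\<forall>t\<in>T. \<forall>t'\<in>T. inv t \<otimes> t' \<in> D \<longrightarrow> t = t'"
    using transversal[OF K Dsg DK fD] by blast
  have Tc: "T \<subseteq> carrier G" using T Kc by blast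
  define q where "q = (if J = {} then 1 else Suc m)"
  have "\<exists>Y \<subseteq> D. finite Y \<and> card Y = q \<and> (\<forall>y\<in>Y. \<forall>y'\<in>Y. \<forall>A\<in>J. inv y \<otimes> y' \<in> A \<longrightarrow> y = y')"
  proof (cases "J = {}")
    case True
    then show ?thesis unfolding q_def using subgroup.one_closed[OF Dsg]
      by (intro exI[of _ "{\<one>}"]) auto
  next
    case False
    then have q: "q = Suc m" unfolding q_def by simp
    have JS: "\<And>A. A \<in> J \<Longrightarrow> subgroup A G \<and> A \<subseteq> K \<and> \<not> fin_idx G K A"
      using S unfolding J_def I_def by auto
    have nfi: "\<And>A. A \<in> J \<Longrightarrow> \<not> fin_idx G D (D \<inter> A)"
      using fin_idx_trans[OF K Dsg DK fD] JS by blast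
    show ?thesis unfolding q
    proof (rule greedy_sep)
      fix Y assume Y: "Y \<subseteq> D" "finite Y" "card Y < Suc m"
      define CS where "CS = Y \<times> ((\<lambda>A. D \<inter> A) ` J)"
      have finJ: "finite J" using finS unfolding J_def by simp
      have finCS: "finite CS" unfolding CS_def using Y(2) finJ by simp
      have hCS: "\<forall>(c,B)\<in>CS. c \<in> D \<and> subgroup B G \<and> B \<subseteq> D \<and> \<not> fin_idx G D B"
        unfolding CS_def using Y(1) nfi JS subgroups_Inter_pair[OF Dsg] by auto
      have "\<not> D \<subseteq> (\<Union>(c,B)\<in>CS. c <# B)" by (rule weak_neumann[OF Dsg finCS hCS])
      then obtain z where z: "z \<in> D" "z \<notin> (\<Union>(c,B)\<in>CS. c <# B)" by blast
      have zc: "z \<in> carrier G" using z Dc by blast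
      have sep: "\<forall>y\<in>Y. \<forall>A\<in>J. inv y \<otimes> z \<notin> A"
      proof (intro ballI notI)
        fix y A assume yA: "y \<in> Y" "A \<in> J" "inv y \<otimes> z \<in> A"
        have yD: "y \<in> D" and yc: "y \<in> carrier G" using yA Y(1) Dc by auto
        have "inv y \<otimes> z \<in> D" using subgroup.m_closed[OF Dsg subgroup.m_inv_closed[OF Dsg yD] z(1)] .
        then have "inv y \<otimes> z \<in> D \<inter> A" using yA by blast
        then have "z \<in> y <# (D \<inter> A)"
          using lcos_mem_iff[OF subgroups_Inter_pair[OF Dsg JS[OF yA(2), THEN conjunct1]] yc zc] by blast
        moreover have "(y, D \<inter> A) \<in> CS" unfolding CS_def using yA by blast
        ultimately show False using z(2) by blast
      qed
      have "z \<notin> Y"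
      proof
        assume zY: "z \<in> Y"
        obtain A where A: "A \<in> J" using False by blast
        have "\<one> \<in> A" using subgroup.one_closed JS[OF A] by blast
        then have "inv z \<otimes> z \<in> A" using zc by simp
        then show False using sep zY A by blast
      qed
      then show "\<exists>z\<in>D - Y. \<forall>y\<in>Y. \<forall>A\<in>J. inv y \<otimes> z \<notin> A" using z(1) sep by blast
    next
      fix A y z assume "A \<in> J" "y \<in> D" "z \<in> D" "inv y \<otimes> z \<in> A"
      then show "inv z \<otimes> y \<in> A" using inv_mult_sym[of A y z] JS Dc by blast
    qed
  qed
  then obtain Y where Y: "Y \<subseteq> D" "finite Y" "card Y = q"
    "\<forall>y\<in>Y. \<forall>y'\<in>Y. \<forall>A\<in>J. inv y \<otimes> y' \<in> A \<longrightarrow> y = y'" by blast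
  have Yc: "Y \<subseteq> carrier G" using Y Dc by blast
  define f where "f = (\<lambda>(t::'a,y::'a). t \<otimes> y)"
  define F where "F = f ` (T \<times> Y)"
  have injf: "inj_on f (T \<times> Y)"
  proof (rule inj_onI)
    fix p p' assume p: "p \<in> T \<times> Y" "p' \<in> T \<times> Y" "f p = f p'"
    obtain t y t' y' where tt: "p = (t,y)" "p' = (t',y')" by (cases p, cases p') auto
    have mem: "t \<in> T" "y \<in> Y" "t' \<in> T" "y' \<in> Y" using p tt by auto
    have cc: "t \<in> carrier G" "y \<in> carrier G" "t' \<in> carrier G" "y' \<in> carrier G" using mem Tc Yc by auto
    have eq: "t \<otimes> y = t' \<otimes> y'" using p(3) tt unfolding f_def by simp
    have "inv t \<otimes> t' = y \<otimes> inv y'" using pair_cancel[OF cc eq] .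
    moreover have "y \<otimes> inv y' \<in> D"
      using subgroup.m_closed[OF Dsg _ subgroup.m_inv_closed[OF Dsg]] mem Y(1) by blast
    ultimately have "t = t'" using T(4) mem by auto
    then have "y = y'" using eq cc by simp
    then show "p = p'" using tt \<open>t = t'\<close> by simp
  qed
  have cardF: "card F = card T * q" unfolding F_def using card_image[OF injf] T(2) Y(2,3)
    by (simp add: card_cartesian_product)
  have FK: "F \<subseteq> K"
  proof
    fix x assume "x \<in> F"
    then obtain t y where "t \<in> T" "y \<in> Y" "x = t \<otimes> y" unfolding F_def f_def by auto
    then show "x \<in> K" using T(1) Y(1) DK subgroup.m_closed[OF K, of t y] by auto
  qed
  have finF: "finite F" unfolding F_def using T(2) Y(2) by simp
  have Tne: "T \<noteq> {}" using T(3) subgroup.one_closed[OF K] by auto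
  have Yne: "Y \<noteq> {}" using Y(3) unfolding q_def by (auto split: if_splits)
  have Fne: "F \<noteq> {}" unfolding F_def using Tne Yne by auto
  have bound: "\<forall>A\<in>S. \<forall>c\<in>K. Suc m * card (F \<inter> (c <# A)) \<le> card F"
  proof (intro ballI)
    fix A c assume A: "A \<in> S" and c: "c \<in> K"
    have Asg: "subgroup A G" and AK: "A \<subseteq> K" and ncov: "\<not> cov_le G K A m" using S A by auto
    have cc: "c \<in> carrier G" using c Kc by blast
    show "Suc m * card (F \<inter> (c <# A)) \<le> card F"
    proof (cases "A \<in> I")
      case True
      have DA': "D \<subseteq> A" using DA[OF True] .
      have sub1: "F \<inter> (c <# A) \<subseteq> f ` ((T \<inter> (c <# A)) \<times> Y)"
      proof
        fix x assume x: "x \<in> F \<inter> (c <# A)"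
        then obtain t y where ty: "t \<in> T" "y \<in> Y" "x = t \<otimes> y" unfolding F_def f_def by auto
        have tyc: "t \<in> carrier G" "y \<in> carrier G" using ty Tc Yc by auto
        have "inv c \<otimes> (t \<otimes> y) \<in> A" using x ty lcos_mem_iff[OF Asg cc] tyc by auto
        moreover have "inv y \<in> A" using ty(2) Y(1) DA' subgroup.m_inv_closed[OF Asg] by blast
        ultimately have "inv c \<otimes> (t \<otimes> y) \<otimes> inv y \<in> A" using subgroup.m_closed[OF Asg] by blast
        moreover have "inv c \<otimes> (t \<otimes> y) \<otimes> inv y = inv c \<otimes> t" using tyc cc by (simp add: m_assoc)
        ultimately have "t \<in> c <# A" using lcos_mem_iff[OF Asg cc tyc(1)] by simp
        then show "x \<in> f ` ((T \<inter> (c <# A)) \<times> Y)" using ty unfolding f_def by auto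
      qed
      have c1: "card (F \<inter> (c <# A)) \<le> card (T \<inter> (c <# A)) * q"
      proof -
        have "card (F \<inter> (c <# A)) \<le> card (f ` ((T \<inter> (c <# A)) \<times> Y))"
          using sub1 T(2) Y(2) by (intro card_mono) auto
        also have "\<dots> \<le> card ((T \<inter> (c <# A)) \<times> Y)" by (rule card_image_le) (use T(2) Y(2) in auto)
        also have "\<dots> = card (T \<inter> (c <# A)) * q" using Y(3) by (simp add: card_cartesian_product)
        finally show ?thesis .
      qed
      obtain Cs where Cs: "Cs \<subseteq> K" "finite Cs" "card Cs = Suc m"
        "\<forall>y\<in>Cs. \<forall>y'\<in>Cs. inv y \<otimes> y' \<in> A \<longrightarrow> y = y'"
        using distinct_cosets[OF K Asg AK ncov] by blast
      have Csc: "Cs \<subseteq> carrier G" using Cs Kc by blast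
      define tau where "tau = (\<lambda>z. SOME t. t \<in> T \<and> inv t \<otimes> z \<in> D)"
      have tau: "\<And>z. z \<in> K \<Longrightarrow> tau z \<in> T \<and> inv (tau z) \<otimes> z \<in> D"
      proof -
        fix z assume "z \<in> K"
        then have "\<exists>t. t \<in> T \<and> inv t \<otimes> z \<in> D" using T(3) by blast
        then show "tau z \<in> T \<and> inv (tau z) \<otimes> z \<in> D" unfolding tau_def by (rule someI_ex)
      qed
      have le_each: "\<And>c'. c' \<in> Cs \<Longrightarrow> card (T \<inter> (c <# A)) \<le> card (T \<inter> (c' <# A))"
      proof -
        fix c' assume c': "c' \<in> Cs"
        have c'c: "c' \<in> carrier G" and c'K: "c' \<in> K" using c' Cs Csc by auto
        define phi where "phi = (\<lambda>t. tau (c' \<otimes> inv c \<otimes> t))"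
        have mK: "\<And>t. t \<in> T \<Longrightarrow> c' \<otimes> inv c \<otimes> t \<in> K"
          using c'K c T(1) subgroup.m_closed[OF K] subgroup.m_inv_closed[OF K] by blast
        have phi_in: "phi ` (T \<inter> (c <# A)) \<subseteq> T \<inter> (c' <# A)"
        proof
          fix x assume "x \<in> phi ` (T \<inter> (c <# A))"
          then obtain t where t: "t \<in> T" "t \<in> c <# A" "x = phi t" by blast
          have tc: "t \<in> carrier G" using t Tc by blast
          let ?w = "c' \<otimes> inv c \<otimes> t"
          have wc: "?w \<in> carrier G" using c'c cc tc by simp
          have tw: "tau ?w \<in> T" "inv (tau ?w) \<otimes> ?w \<in> D" using tau[OF mK[OF t(1)]] by auto
          have twc: "tau ?w \<in> carrier G" using tw Tc by blast
          have "inv c \<otimes> t \<in> A" using lcos_mem_iff[OF Asg cc tc] t by blast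
          moreover have "inv c' \<otimes> ?w = inv c \<otimes> t" using c'c cc tc by (simp add: m_assoc[symmetric])
          ultimately have h1: "inv c' \<otimes> ?w \<in> A" by simp
          have "inv ?w \<otimes> tau ?w \<in> A" using inv_mult_sym[OF Asg twc wc] tw(2) DA' by blast
          then have "inv c' \<otimes> tau ?w \<in> A" using inv_mult_trans[OF Asg c'c wc twc h1] by blast
          then have "tau ?w \<in> c' <# A" using lcos_mem_iff[OF Asg c'c twc] by blast
          then show "x \<in> T \<inter> (c' <# A)" using t tw unfolding phi_def by blast
        qed
        have phi_inj: "inj_on phi (T \<inter> (c <# A))"
        proof (rule inj_onI)
          fix t1 t2 assume t1: "t1 \<in> T \<inter> (c <# A)" and t2: "t2 \<in> T \<inter> (c <# A)" and eq: "phi t1 = phi t2"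
          have t1c: "t1 \<in> carrier G" and t2c: "t2 \<in> carrier G" using t1 t2 Tc by auto
          let ?w1 = "c' \<otimes> inv c \<otimes> t1" and ?w2 = "c' \<otimes> inv c \<otimes> t2"
          have w1c: "?w1 \<in> carrier G" and w2c: "?w2 \<in> carrier G" using c'c cc t1c t2c by auto
          have tw1: "inv (tau ?w1) \<otimes> ?w1 \<in> D" using tau[OF mK] t1 by blast
          have tw2: "inv (tau ?w2) \<otimes> ?w2 \<in> D" using tau[OF mK] t2 by blast
          have tauc: "tau ?w1 \<in> carrier G" using tau[OF mK] t1 Tc by blast
          have eq': "tau ?w1 = tau ?w2" using eq unfolding phi_def .
          have "inv ?w1 \<otimes> tau ?w1 \<in> D" using inv_mult_sym[OF Dsg tauc w1c tw1] .
          then have "inv ?w1 \<otimes> ?w2 \<in> D" using inv_mult_trans[OF Dsg w1c tauc w2c] tw2 eq' by simp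
          moreover have "inv ?w1 \<otimes> ?w2 = inv t1 \<otimes> t2"
          proof -
            have "inv ?w1 = inv t1 \<otimes> inv (c' \<otimes> inv c)" using c'c cc t1c by (intro inv_mult_group) auto
            then have "inv ?w1 \<otimes> ?w2 = inv t1 \<otimes> inv (c' \<otimes> inv c) \<otimes> ((c' \<otimes> inv c) \<otimes> t2)" by simp
            also have "\<dots> = inv t1 \<otimes> t2"
            proof -
              have cm: "c' \<otimes> inv c \<in> carrier G" using c'c cc by simp
              have "inv t1 \<otimes> inv (c' \<otimes> inv c) \<otimes> (inv (inv (c' \<otimes> inv c)) \<otimes> t2) = inv t1 \<otimes> t2"
                using cm t1c t2c by (intro cancel_mid) auto
              then show ?thesis using cm by (simp only: inv_inv)
            qed
            finally show ?thesis .
          qed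
          ultimately have "inv t1 \<otimes> t2 \<in> D" by simp
          then show "t1 = t2" using T(4) t1 t2 by blast
        qed
        have "card (T \<inter> (c <# A)) = card (phi ` (T \<inter> (c <# A)))" using card_image[OF phi_inj] by simp
        also have "\<dots> \<le> card (T \<inter> (c' <# A))" using phi_in T(2) by (intro card_mono) auto
        finally show "card (T \<inter> (c <# A)) \<le> card (T \<inter> (c' <# A))" .
      qed
      have disj: "\<And>c1 c2. c1 \<in> Cs \<Longrightarrow> c2 \<in> Cs \<Longrightarrow> c1 \<noteq> c2 \<Longrightarrow> (T \<inter> (c1 <# A)) \<inter> (T \<inter> (c2 <# A)) = {}"
      proof -
        fix c1 c2 assume cs: "c1 \<in> Cs" "c2 \<in> Cs" "c1 \<noteq> c2"
        have c1c: "c1 \<in> carrier G" and c2c: "c2 \<in> carrier G" using cs Csc by auto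
        show "(T \<inter> (c1 <# A)) \<inter> (T \<inter> (c2 <# A)) = {}"
        proof (rule ccontr)
          assume "(T \<inter> (c1 <# A)) \<inter> (T \<inter> (c2 <# A)) \<noteq> {}"
          then obtain x where x: "x \<in> T" "x \<in> c1 <# A" "x \<in> c2 <# A" by blast
          have xc: "x \<in> carrier G" using x Tc by blast
          have "inv c1 \<otimes> x \<in> A" using lcos_mem_iff[OF Asg c1c xc] x by blast
          moreover have "inv c2 \<otimes> x \<in> A" using lcos_mem_iff[OF Asg c2c xc] x by blast
          then have "inv x \<otimes> c2 \<in> A" using inv_mult_sym[OF Asg c2c xc] by blast
          ultimately have "inv c1 \<otimes> c2 \<in> A" using inv_mult_trans[OF Asg c1c xc c2c] by blast
          then show False using Cs(4) cs by blast
        qed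
      qed
      have "Suc m * card (T \<inter> (c <# A)) = (\<Sum>c'\<in>Cs. card (T \<inter> (c <# A)))" using Cs(3) by simp
      also have "\<dots> \<le> (\<Sum>c'\<in>Cs. card (T \<inter> (c' <# A)))" using le_each by (intro sum_mono) auto
      also have "\<dots> = card (\<Union>c'\<in>Cs. T \<inter> (c' <# A))"
        using Cs(2) T(2) disj by (intro card_UN_disjoint[symmetric]) auto
      also have "\<dots> \<le> card T" using T(2) by (intro card_mono) auto
      finally have key: "Suc m * card (T \<inter> (c <# A)) \<le> card T" .
      have "Suc m * card (F \<inter> (c <# A)) \<le> Suc m * (card (T \<inter> (c <# A)) * q)" using c1 by (rule mult_le_mono2)
      also have "\<dots> = (Suc m * card (T \<inter> (c <# A))) * q" by (simp only: mult.assoc)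
      also have "\<dots> \<le> card T * q" using key by (rule mult_right_mono) simp
      finally show ?thesis using cardF by simp
    next
      case False
      then have AJ: "A \<in> J" unfolding J_def using A by blast
      then have q: "q = Suc m" unfolding q_def by auto
      define Pset where "Pset = {p \<in> T \<times> Y. f p \<in> c <# A}"
      have sub: "F \<inter> (c <# A) \<subseteq> f ` Pset" unfolding F_def Pset_def by auto
      have injfst: "inj_on fst Pset"
      proof (rule inj_onI)
        fix p p' assume p: "p \<in> Pset" "p' \<in> Pset" "fst p = fst p'"
        obtain t y t' y' where tt: "p = (t,y)" "p' = (t',y')" by (cases p, cases p') auto
        have mem: "t \<in> T" "y \<in> Y" "y' \<in> Y" "t' = t" using p tt unfolding Pset_def by auto
        have cc': "t \<in> carrier G" "y \<in> carrier G" "y' \<in> carrier G" using mem Tc Yc by auto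
        have m1: "t \<otimes> y \<in> c <# A" "t \<otimes> y' \<in> c <# A" using p tt mem unfolding Pset_def f_def by auto
        have "inv c \<otimes> (t \<otimes> y) \<in> A" using lcos_mem_iff[OF Asg cc] m1 cc' by simp
        then have "inv (t \<otimes> y) \<otimes> c \<in> A" using inv_mult_sym[OF Asg cc] cc' by simp
        moreover have "inv c \<otimes> (t \<otimes> y') \<in> A" using lcos_mem_iff[OF Asg cc] m1 cc' by simp
        ultimately have "inv (t \<otimes> y) \<otimes> (t \<otimes> y') \<in> A" using inv_mult_trans[OF Asg _ cc] cc' by simp
        then have "inv y \<otimes> y' \<in> A" using pair_inv_mult[OF cc'] by simp
        then have "y = y'" using Y(4) mem AJ by blast
        then show "p = p'" using tt mem by simp
      qed
      have "card (F \<inter> (c <# A)) \<le> card (f ` Pset)"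
        using sub T(2) Y(2) unfolding Pset_def by (intro card_mono) auto
      also have "\<dots> \<le> card Pset" by (rule card_image_le) (use T(2) Y(2) in \<open>auto simp: Pset_def\<close>)
      also have "\<dots> = card (fst ` Pset)" using card_image[OF injfst] by simp
      also have "\<dots> \<le> card T" using T(2) unfolding Pset_def by (intro card_mono) auto
      finally have "card (F \<inter> (c <# A)) \<le> card T" .
      then have "Suc m * card (F \<inter> (c <# A)) \<le> Suc m * card T" by (rule mult_le_mono2)
      then show ?thesis using cardF q by (simp add: mult.commute)
    qed
  qed
  show ?thesis using FK finF Fne bound by blast
qed

end


definition fixes_out :: "'a set \<Rightarrow> ('a \<Rightarrow> 'a) \<Rightarrow> 'a set \<Rightarrow> bool" where
  "fixes_out \<Omega> f X \<longleftrightarrow> (\<forall>x\<in>\<Omega>. x \<notin> X \<longrightarrow> f x = x)"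

locale pctx =
  fixes \<Omega> :: "'a set"
begin

abbreviation mul (infixl "\<cdot>" 70) where "f \<cdot> g \<equiv> f \<otimes>\<^bsub>BijGroup \<Omega>\<^esub> g"
abbreviation iv where "iv f \<equiv> inv\<^bsub>BijGroup \<Omega>\<^esub> f"
abbreviation BC where "BC \<equiv> carrier (BijGroup \<Omega>)"
abbreviation e where "e \<equiv> \<one>\<^bsub>BijGroup \<Omega>\<^esub>"
abbreviation fo where "fo f X \<equiv> fixes_out \<Omega> f X"

sublocale BG: group "BijGroup \<Omega>" by (rule group_BijGroup)

lemma BC_def': "BC = Bij \<Omega>" by (simp add: BijGroup_def)

lemma mul_apply: "f \<in> BC \<Longrightarrow> g \<in> BC \<Longrightarrow> x \<in> \<Omega> \<Longrightarrow> (f \<cdot> g) x = f (g x)"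
  by (simp add: BijGroup_def compose_def)

lemma BC_into: "f \<in> BC \<Longrightarrow> x \<in> \<Omega> \<Longrightarrow> f x \<in> \<Omega>"
  by (auto simp: BijGroup_def Bij_def bij_betw_def)

lemma BC_inj: "f \<in> BC \<Longrightarrow> x \<in> \<Omega> \<Longrightarrow> y \<in> \<Omega> \<Longrightarrow> f x = f y \<Longrightarrow> x = y"
  by (auto simp: BijGroup_def Bij_def bij_betw_def inj_on_def)

lemma iv_apply: "f \<in> BC \<Longrightarrow> x \<in> \<Omega> \<Longrightarrow> iv f x = inv_into \<Omega> f x"
  by (simp add: inv_BijGroup BC_def')

lemma f_iv: "f \<in> BC \<Longrightarrow> x \<in> \<Omega> \<Longrightarrow> f (iv f x) = x"
  using iv_apply by (auto simp: BijGroup_def Bij_def bij_betw_def f_inv_into_f)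

lemma iv_f:
  assumes f: "f \<in> BC" and x: "x \<in> \<Omega>"
  shows "iv f (f x) = x"
proof -
  have "iv f (f x) = inv_into \<Omega> f (f x)" using iv_apply[OF f BC_into[OF f x]] .
  moreover have "inj_on f \<Omega>" using f by (simp add: BijGroup_def Bij_def bij_betw_def)
  ultimately show ?thesis using x by (simp add: inv_into_f_f)
qed

lemma iv_into: "f \<in> BC \<Longrightarrow> x \<in> \<Omega> \<Longrightarrow> iv f x \<in> \<Omega>"
  using BC_into BG.inv_closed by blast

lemma one_apply: "x \<in> \<Omega> \<Longrightarrow> e x = x"
  by (simp add: BijGroup_def)

lemma BC_eqI: "f \<in> BC \<Longrightarrow> g \<in> BC \<Longrightarrow> (\<And>x. x \<in> \<Omega> \<Longrightarrow> f x = g x) \<Longrightarrow> f = g"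
  by (auto simp: BijGroup_def Bij_def intro: extensionalityI)

lemma fo_image:
  assumes f: "f \<in> BC" and fo: "fo f X" and x: "x \<in> \<Omega>" "x \<in> X"
  shows "f x \<in> X"
proof (rule ccontr)
  assume "f x \<notin> X"
  then have "f (f x) = f x" using fo BC_into[OF f x(1)] unfolding fixes_out_def by blast
  then have "f x = x" using BC_inj[OF f BC_into[OF f x(1)] x(1)] by blast
  then show False using \<open>f x \<notin> X\<close> x by simp
qed

lemma fo_mul: "f \<in> BC \<Longrightarrow> g \<in> BC \<Longrightarrow> fo f X \<Longrightarrow> fo g X \<Longrightarrow> fo (f \<cdot> g) X"
  unfolding fixes_out_def by (simp add: mul_apply)

lemma fo_iv:
  assumes f: "f \<in> BC" and fo: "fo f X"
  shows "fo (iv f) X"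
  unfolding fixes_out_def
proof (intro ballI impI)
  fix x assume x: "x \<in> \<Omega>" "x \<notin> X"
  have "f x = x" using fo x unfolding fixes_out_def by blast
  then show "iv f x = x" using iv_f[OF f x(1)] by simp
qed

lemma fo_mono: "fo f X \<Longrightarrow> X \<subseteq> Y \<Longrightarrow> fo f Y"
  unfolding fixes_out_def by blast

lemma fo_one: "fo e X"
  unfolding fixes_out_def by (simp add: one_apply)

lemma fo_commute:
  assumes f: "f \<in> BC" and g: "g \<in> BC" and ff: "fo f X" and fg: "fo g Y" and d: "X \<inter> Y = {}"
  shows "f \<cdot> g = g \<cdot> f"
proof (rule BC_eqI)
  show "f \<cdot> g \<in> BC" "g \<cdot> f \<in> BC" using f g by auto
  fix x assume x: "x \<in> \<Omega>"
  show "(f \<cdot> g) x = (g \<cdot> f) x"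
  proof (cases "x \<in> X")
    case True
    then have "g x = x" using fg d x unfolding fixes_out_def by blast
    moreover have "f x \<in> X" using fo_image[OF f ff x True] .
    then have "g (f x) = f x" using fg d BC_into[OF f x] unfolding fixes_out_def by blast
    ultimately show ?thesis using f g x by (simp add: mul_apply)
  next
    case False
    then have fx: "f x = x" using ff x unfolding fixes_out_def by blast
    show ?thesis
    proof (cases "x \<in> Y")
      case True
      have "g x \<in> Y" using fo_image[OF g fg x True] .
      then have "f (g x) = g x" using ff d BC_into[OF g x] unfolding fixes_out_def by blast
      then show ?thesis using f g x fx by (simp add: mul_apply)
    next
      case False
      then have "g x = x" using fg x unfolding fixes_out_def by blast
      then show ?thesis using f g x fx by (simp add: mul_apply)
    qed
  qed
qed

lemma fo_conj:
  assumes s: "s \<in> BC" and d: "d \<in> BC" and fd: "fo d X"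
  shows "fo (s \<cdot> d \<cdot> iv s) (s ` X)"
  unfolding fixes_out_def
proof (intro ballI impI)
  fix x assume x: "x \<in> \<Omega>" "x \<notin> s ` X"
  have y: "iv s x \<in> \<Omega>" using iv_into[OF s x(1)] .
  have "iv s x \<notin> X" using x f_iv[OF s x(1)] by (metis image_eqI)
  then have "d (iv s x) = iv s x" using fd y unfolding fixes_out_def by blast
  then show "(s \<cdot> d \<cdot> iv s) x = x" using s d x y by (simp add: mul_apply f_iv)
qed

lemma fo_image_eq:
  assumes f: "f \<in> BC" and fo: "fo f X" and X: "X \<subseteq> \<Omega>"
  shows "f ` X = X"
proof
  show "f ` X \<subseteq> X" using fo_image[OF f fo] X by blast
  show "X \<subseteq> f ` X"
  proof
    fix y assume y: "y \<in> X"
    have yo: "y \<in> \<Omega>" using y X by blast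
    have "iv f y \<in> X" using fo_image[OF BG.inv_closed[OF f] fo_iv[OF f fo] yo y] .
    moreover have "f (iv f y) = y" using f_iv[OF f yo] .
    ultimately show "y \<in> f ` X" by (metis image_eqI)
  qed
qed

lemma fo_fixes:
  assumes "fo f X" "Y \<inter> X = {}" "Y \<subseteq> \<Omega>" "y \<in> Y"
  shows "f y = y"
  using assms unfolding fixes_out_def by blast

end


context group
begin

lemma conj_word:
  assumes "g \<in> carrier G" "c \<in> carrier G" "s \<in> carrier G"
  shows "(inv g \<otimes> s \<otimes> g) \<otimes> inv (inv (g \<otimes> c) \<otimes> s \<otimes> (g \<otimes> c))
       = inv g \<otimes> (s \<otimes> (g \<otimes> inv c \<otimes> inv g) \<otimes> inv s) \<otimes> g \<otimes> c"
  using assms by (simp add: m_assoc inv_mult_group)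

lemma inv_conj:
  assumes "s \<in> carrier G" "b \<in> carrier G"
  shows "inv (s \<otimes> b \<otimes> inv s) = s \<otimes> inv b \<otimes> inv s"
  using assms by (simp add: m_assoc inv_mult_group)

lemma conj_mult:
  assumes "s \<in> carrier G" "a \<in> carrier G" "b \<in> carrier G"
  shows "(s \<otimes> a \<otimes> inv s) \<otimes> (s \<otimes> b \<otimes> inv s) = s \<otimes> (a \<otimes> b) \<otimes> inv s"
proof -
  have "(s \<otimes> a \<otimes> inv s) \<otimes> (s \<otimes> b \<otimes> inv s) = (s \<otimes> a) \<otimes> (inv s \<otimes> (s \<otimes> (b \<otimes> inv s)))"
    using assms by (simp add: m_assoc)
  also have "inv s \<otimes> (s \<otimes> (b \<otimes> inv s)) = b \<otimes> inv s" using assms by (simp add: m_assoc[symmetric])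
  finally show ?thesis using assms by (simp add: m_assoc)
qed

lemma conj_cancel:
  assumes "g \<in> carrier G" "w \<in> carrier G" "g \<otimes> w = w \<otimes> g"
  shows "inv g \<otimes> w \<otimes> g = w"
proof -
  have "inv g \<otimes> w \<otimes> g = inv g \<otimes> (w \<otimes> g)" using assms by (simp add: m_assoc)
  also have "\<dots> = inv g \<otimes> (g \<otimes> w)" using assms by simp
  also have "\<dots> = w" using assms(1,2) by (simp add: m_assoc[symmetric])
  finally show ?thesis .
qed

end


locale csetup = pctx \<Omega> for \<Omega> :: "'a set" +
  fixes n :: nat and H :: "nat \<Rightarrow> ('a \<Rightarrow> 'a) set" and G P :: "('a \<Rightarrow> 'a) set"
    and W :: "('a \<Rightarrow> 'a) \<Rightarrow> 'a set"
  assumes n1: "n \<ge> 1"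
    and Hsg: "\<And>j. j \<in> {1..n} \<Longrightarrow> subgroup (H j) (BijGroup \<Omega>)"
    and Gsg: "subgroup G (BijGroup \<Omega>)"
    and conf: "confining_subset \<Omega> n H G P"
    and dc: "displacement_configuration \<Omega> P W"
    and ntriv: "\<And>\<sigma>. \<sigma> \<in> P \<Longrightarrow> Rist \<Omega> G (W \<sigma>) \<noteq> {\<one>\<^bsub>BijGroup \<Omega>\<^esub>}"
    and fc: "\<And>\<sigma>. \<sigma> \<in> P \<Longrightarrow> FC_le \<Omega> (n * card P) (Rist \<Omega> G (W \<sigma>)) = {\<one>\<^bsub>BijGroup \<Omega>\<^esub>}"
begin

abbreviation "m \<equiv> n * card P"
definition "Bl = W ` P"
definition "U = \<Union>Bl"
abbreviation "R b \<equiv> Rist \<Omega> G b"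
definition "Lg g \<longleftrightarrow> g \<in> G \<and> fo g U \<and> (\<forall>b\<in>Bl. g ` b = b)"
definition "T j \<sigma> = {g \<in> BC. iv g \<cdot> \<sigma> \<cdot> g \<in> H j}"
definition "A j \<sigma> = {\<alpha> \<in> R (W \<sigma>). \<exists>\<beta> \<in> R (W \<sigma>). \<alpha> \<cdot> (\<sigma> \<cdot> \<beta> \<cdot> iv \<sigma>) \<in> H j}"

lemma GBC: "G \<subseteq> BC" using Gsg subgroup.subset by blast

lemma finP: "finite P" and PBC: "P \<subseteq> BC" and Pne1: "\<And>\<sigma>. \<sigma> \<in> P \<Longrightarrow> \<sigma> \<noteq> e"
  and confG: "\<And>g. g \<in> G \<Longrightarrow> \<exists>j\<in>{1..n}. conj_set \<Omega> g (H j) \<inter> P \<noteq> {}"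
  using conf unfolding confining_subset_def by auto

lemma HBC: "j \<in> {1..n} \<Longrightarrow> H j \<subseteq> BC" using Hsg subgroup.subset by blast

lemma Rist_fo: "Rist \<Omega> G X = {g \<in> G. fo g X}"
  unfolding Rist_def fixes_out_def by auto

lemma R_sg: "subgroup (R X) (BijGroup \<Omega>)"
proof (rule BG.subgroupI)
  show "R X \<subseteq> BC" using GBC unfolding Rist_fo by auto
  show "R X \<noteq> {}" using subgroup.one_closed[OF Gsg] fo_one unfolding Rist_fo by auto
  fix a b assume a: "a \<in> R X" and b: "b \<in> R X"
  show "iv a \<in> R X" using a subgroup.m_inv_closed[OF Gsg] fo_iv GBC unfolding Rist_fo by blast
  show "a \<cdot> b \<in> R X" using a b subgroup.m_closed[OF Gsg] fo_mul GBC unfolding Rist_fo by blast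
qed

lemma R_G: "R X \<subseteq> G" unfolding Rist_def by auto
lemma R_BC: "R X \<subseteq> BC" using R_G GBC by blast
lemma R_fo: "g \<in> R X \<Longrightarrow> fo g X" unfolding Rist_fo by auto

lemma dcs1: "\<forall>\<sigma>\<in>P. W \<sigma> \<noteq> {} \<and> W \<sigma> \<subseteq> \<Omega>"
  using dc unfolding displacement_configuration_def by (elim conjE) assumption

lemma dcs2: "\<forall>\<sigma>\<in>P. \<forall>\<rho>\<in>P. W \<sigma> = W \<rho> \<or> W \<sigma> \<inter> W \<rho> = {}"
  using dc unfolding displacement_configuration_def by (elim conjE) assumption

lemma dcs3: "\<forall>\<sigma>\<in>P. \<forall>\<rho>\<in>P. (\<forall>x\<in>W \<rho>. \<sigma> x = x) \<or> \<sigma> ` W \<rho> \<inter> (\<Union>\<alpha>\<in>P. W \<alpha>) = {}"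
  using dc unfolding displacement_configuration_def by (elim conjE) assumption

lemma dcs4: "\<forall>\<sigma>\<in>P. \<sigma> ` W \<sigma> \<inter> (\<Union>\<alpha>\<in>P. W \<alpha>) = {} \<and> \<sigma> ` W \<sigma> \<inter> (\<Union>\<alpha>\<in>P. (iv \<sigma>) ` W \<alpha>) = {}"
  using dc unfolding displacement_configuration_def by (elim conjE) assumption

lemma U_eq: "U = (\<Union>\<alpha>\<in>P. W \<alpha>)" unfolding U_def Bl_def by simp

lemma W_sub: "\<sigma> \<in> P \<Longrightarrow> W \<sigma> \<subseteq> \<Omega>" and W_ne: "\<sigma> \<in> P \<Longrightarrow> W \<sigma> \<noteq> {}"
  using dcs1 by auto

lemma C1: "\<sigma> \<in> P \<Longrightarrow> \<rho> \<in> P \<Longrightarrow> W \<sigma> = W \<rho> \<or> W \<sigma> \<inter> W \<rho> = {}"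
  using dcs2 by blast

lemma C3: "\<sigma> \<in> P \<Longrightarrow> \<rho> \<in> P \<Longrightarrow> (\<forall>x\<in>W \<rho>. \<sigma> x = x) \<or> \<sigma> ` W \<rho> \<inter> U = {}"
  unfolding U_eq using dcs3 by blast

lemma D1: "\<sigma> \<in> P \<Longrightarrow> \<sigma> ` W \<sigma> \<inter> U = {}"
  unfolding U_eq using dcs4 by blast

lemma D4: assumes s: "\<sigma> \<in> P" shows "\<sigma> ` W \<sigma> \<inter> iv \<sigma> ` W \<sigma> = {}"
proof -
  have "\<sigma> ` W \<sigma> \<inter> (\<Union>\<alpha>\<in>P. (iv \<sigma>) ` W \<alpha>) = {}" using dcs4 s by blast
  moreover have "iv \<sigma> ` W \<sigma> \<subseteq> (\<Union>\<alpha>\<in>P. (iv \<sigma>) ` W \<alpha>)" using s by blast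
  ultimately show ?thesis by blast
qed

lemma W_U: "\<sigma> \<in> P \<Longrightarrow> W \<sigma> \<subseteq> U" unfolding U_def Bl_def by auto

lemma U_sub: "U \<subseteq> \<Omega>" unfolding U_def Bl_def using W_sub by auto

lemma D2: "\<sigma> \<in> P \<Longrightarrow> \<sigma> ` W \<sigma> \<inter> W \<sigma> = {}"
  using D1 W_U by blast

lemma D3: assumes s: "\<sigma> \<in> P" shows "iv \<sigma> ` W \<sigma> \<inter> W \<sigma> = {}"
proof (rule ccontr)
  assume "iv \<sigma> ` W \<sigma> \<inter> W \<sigma> \<noteq> {}"
  then obtain y where y: "y \<in> W \<sigma>" "iv \<sigma> y \<in> W \<sigma>" by blast
  have sb: "\<sigma> \<in> BC" using s PBC by blast
  have "\<sigma> (iv \<sigma> y) = y" using f_iv[OF sb] y W_sub[OF s] by blast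
  then have "y \<in> \<sigma> ` W \<sigma>" using y(2) by (metis image_eqI)
  then show False using D2[OF s] y(1) by blast
qed

lemma D5: assumes s: "\<sigma> \<in> P" shows "iv \<sigma> ` W \<sigma> \<inter> U = {}"
proof (rule ccontr)
  assume "iv \<sigma> ` W \<sigma> \<inter> U \<noteq> {}"
  then obtain y a where y: "y \<in> W \<sigma>" "iv \<sigma> y \<in> W a" "a \<in> P" unfolding U_def Bl_def by blast
  have sb: "\<sigma> \<in> BC" using s PBC by blast
  have yo: "y \<in> \<Omega>" using y W_sub[OF s] by blast
  have sy: "\<sigma> (iv \<sigma> y) = y" using f_iv[OF sb yo] .
  from C3[OF s y(3)] show False
  proof
    assume "\<forall>x\<in>W a. \<sigma> x = x"
    then have "iv \<sigma> y = y" using y(2) sy by metis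
    then have "y \<in> iv \<sigma> ` W \<sigma> \<inter> W \<sigma>" using y(1) by (metis IntI image_eqI)
    then show False using D3[OF s] by blast
  next
    assume "\<sigma> ` W a \<inter> U = {}"
    moreover have "y \<in> \<sigma> ` W a" using y(2) sy by (metis image_eqI)
    ultimately show False using y(1) W_U[OF s] by blast
  qed
qed

lemma A_sub: "A j \<sigma> \<subseteq> R (W \<sigma>)" unfolding A_def by auto

lemma A_sg:
  assumes j: "j \<in> {1..n}" and s: "\<sigma> \<in> P"
  shows "subgroup (A j \<sigma>) (BijGroup \<Omega>)"
proof (rule BG.subgroupI)
  have sb: "\<sigma> \<in> BC" using s PBC by blast
  let ?B = "W \<sigma>"
  have comm: "\<And>a b. a \<in> R ?B \<Longrightarrow> b \<in> R ?B \<Longrightarrow> (\<sigma> \<cdot> b \<cdot> iv \<sigma>) \<cdot> a = a \<cdot> (\<sigma> \<cdot> b \<cdot> iv \<sigma>)"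
  proof -
    fix a b assume ab: "a \<in> R ?B" "b \<in> R ?B"
    have aB: "a \<in> BC" using ab(1) R_BC by blast
    have bB: "b \<in> BC" using ab(2) R_BC by blast
    have f1: "fo (\<sigma> \<cdot> b \<cdot> iv \<sigma>) (\<sigma> ` ?B)" by (rule fo_conj[OF sb bB R_fo[OF ab(2)]])
    have cB: "\<sigma> \<cdot> b \<cdot> iv \<sigma> \<in> BC" using sb bB by simp
    show "(\<sigma> \<cdot> b \<cdot> iv \<sigma>) \<cdot> a = a \<cdot> (\<sigma> \<cdot> b \<cdot> iv \<sigma>)"
      by (rule fo_commute[OF cB aB f1 R_fo[OF ab(1)] D2[OF s]])
  qed
  show "A j \<sigma> \<subseteq> BC" using A_sub[of j \<sigma>] R_BC[of "W \<sigma>"] by blast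
  have "e \<in> R ?B" using subgroup.one_closed[OF R_sg] .
  moreover have "e \<cdot> (\<sigma> \<cdot> e \<cdot> iv \<sigma>) = e" using sb by simp
  ultimately have "e \<in> A j \<sigma>" unfolding A_def using subgroup.one_closed[OF Hsg[OF j]] by (metis (no_types, lifting) mem_Collect_eq)
  then show "A j \<sigma> \<noteq> {}" by blast
  fix a b assume a: "a \<in> A j \<sigma>" and b: "b \<in> A j \<sigma>"
  obtain \<beta>a where \<beta>a: "\<beta>a \<in> R ?B" "a \<cdot> (\<sigma> \<cdot> \<beta>a \<cdot> iv \<sigma>) \<in> H j" "a \<in> R ?B" using a unfolding A_def by blast
  obtain \<beta>b where \<beta>b: "\<beta>b \<in> R ?B" "b \<cdot> (\<sigma> \<cdot> \<beta>b \<cdot> iv \<sigma>) \<in> H j" "b \<in> R ?B" using b unfolding A_def by blast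
  have cA: "a \<in> BC" "\<beta>a \<in> BC" "b \<in> BC" "\<beta>b \<in> BC" using \<beta>a \<beta>b R_BC by auto
  have "iv (a \<cdot> (\<sigma> \<cdot> \<beta>a \<cdot> iv \<sigma>)) \<in> H j" using subgroup.m_inv_closed[OF Hsg[OF j] \<beta>a(2)] .
  moreover have "iv (a \<cdot> (\<sigma> \<cdot> \<beta>a \<cdot> iv \<sigma>)) = iv a \<cdot> (\<sigma> \<cdot> iv \<beta>a \<cdot> iv \<sigma>)"
  proof -
    have "iv (a \<cdot> (\<sigma> \<cdot> \<beta>a \<cdot> iv \<sigma>)) = iv (\<sigma> \<cdot> \<beta>a \<cdot> iv \<sigma>) \<cdot> iv a"
      using cA sb by (intro BG.inv_mult_group) auto
    also have "iv (\<sigma> \<cdot> \<beta>a \<cdot> iv \<sigma>) = \<sigma> \<cdot> iv \<beta>a \<cdot> iv \<sigma>"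
      using cA sb by (intro BG.inv_conj) auto
    also have "(\<sigma> \<cdot> iv \<beta>a \<cdot> iv \<sigma>) \<cdot> iv a = iv a \<cdot> (\<sigma> \<cdot> iv \<beta>a \<cdot> iv \<sigma>)"
      using comm[OF subgroup.m_inv_closed[OF R_sg \<beta>a(3)] subgroup.m_inv_closed[OF R_sg \<beta>a(1)]] .
    finally show ?thesis .
  qed
  moreover have "iv a \<in> R ?B" "iv \<beta>a \<in> R ?B"
    using subgroup.m_inv_closed[OF R_sg \<beta>a(3)] subgroup.m_inv_closed[OF R_sg \<beta>a(1)] by auto
  ultimately show "iv a \<in> A j \<sigma>" unfolding A_def by auto
  have "(a \<cdot> (\<sigma> \<cdot> \<beta>a \<cdot> iv \<sigma>)) \<cdot> (b \<cdot> (\<sigma> \<cdot> \<beta>b \<cdot> iv \<sigma>)) \<in> H j"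
    using subgroup.m_closed[OF Hsg[OF j] \<beta>a(2) \<beta>b(2)] .
  moreover have "(a \<cdot> (\<sigma> \<cdot> \<beta>a \<cdot> iv \<sigma>)) \<cdot> (b \<cdot> (\<sigma> \<cdot> \<beta>b \<cdot> iv \<sigma>)) = (a \<cdot> b) \<cdot> (\<sigma> \<cdot> (\<beta>a \<cdot> \<beta>b) \<cdot> iv \<sigma>)"
  proof -
    have c1: "\<sigma> \<cdot> \<beta>a \<cdot> iv \<sigma> \<in> BC" using cA sb by simp
    have "(a \<cdot> (\<sigma> \<cdot> \<beta>a \<cdot> iv \<sigma>)) \<cdot> (b \<cdot> (\<sigma> \<cdot> \<beta>b \<cdot> iv \<sigma>)) = a \<cdot> ((\<sigma> \<cdot> \<beta>a \<cdot> iv \<sigma>) \<cdot> b) \<cdot> (\<sigma> \<cdot> \<beta>b \<cdot> iv \<sigma>)"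
      using cA sb c1 by (simp add: BG.m_assoc)
    also have "(\<sigma> \<cdot> \<beta>a \<cdot> iv \<sigma>) \<cdot> b = b \<cdot> (\<sigma> \<cdot> \<beta>a \<cdot> iv \<sigma>)" using comm[OF \<beta>b(3) \<beta>a(1)] .
    also have "a \<cdot> (b \<cdot> (\<sigma> \<cdot> \<beta>a \<cdot> iv \<sigma>)) \<cdot> (\<sigma> \<cdot> \<beta>b \<cdot> iv \<sigma>) = (a \<cdot> b) \<cdot> ((\<sigma> \<cdot> \<beta>a \<cdot> iv \<sigma>) \<cdot> (\<sigma> \<cdot> \<beta>b \<cdot> iv \<sigma>))"
      using cA sb c1 by (simp add: BG.m_assoc)
    also have "(\<sigma> \<cdot> \<beta>a \<cdot> iv \<sigma>) \<cdot> (\<sigma> \<cdot> \<beta>b \<cdot> iv \<sigma>) = \<sigma> \<cdot> (\<beta>a \<cdot> \<beta>b) \<cdot> iv \<sigma>"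
      using sb cA by (intro BG.conj_mult) auto
    finally show ?thesis .
  qed
  moreover have "a \<cdot> b \<in> R ?B" "\<beta>a \<cdot> \<beta>b \<in> R ?B"
    using subgroup.m_closed[OF R_sg \<beta>a(3) \<beta>b(3)] subgroup.m_closed[OF R_sg \<beta>a(1) \<beta>b(1)] by auto
  ultimately show "a \<cdot> b \<in> A j \<sigma>" unfolding A_def by auto
qed

end


context csetup
begin

lemma Bl_disj: "b \<in> Bl \<Longrightarrow> b' \<in> Bl \<Longrightarrow> b \<noteq> b' \<Longrightarrow> b \<inter> b' = {}"
  unfolding Bl_def using C1 by blast

lemma Bl_sub: "b \<in> Bl \<Longrightarrow> b \<subseteq> \<Omega>" unfolding Bl_def using W_sub by blast

lemma Bl_U: "b \<in> Bl \<Longrightarrow> b \<subseteq> U" unfolding U_def by blast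

lemma image_fix: "(\<And>x. x \<in> X \<Longrightarrow> f x = x) \<Longrightarrow> f ` X = X"
  by (metis image_cong image_ident)

lemma mul_image: "f \<in> BC \<Longrightarrow> g \<in> BC \<Longrightarrow> X \<subseteq> \<Omega> \<Longrightarrow> (f \<cdot> g) ` X = f ` (g ` X)"
  by (force simp: mul_apply)

lemma fiber:
  assumes j: "j \<in> {1..n}" and s: "\<sigma> \<in> P" and g: "Lg g" and \<gamma>: "\<gamma> \<in> R (W \<sigma>)"
    and gT: "g \<in> T j \<sigma>" and ggT: "g \<cdot> \<gamma> \<in> T j \<sigma>"
  shows "\<gamma> \<in> A j \<sigma>"
proof -
  let ?B = "W \<sigma>"
  have gG: "g \<in> G" and gU: "fo g U" and gim: "g ` ?B = ?B" using g s unfolding Lg_def Bl_def by auto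
  have gB: "g \<in> BC" using gG GBC by blast
  have cB: "\<gamma> \<in> BC" using \<gamma> R_BC by blast
  have sB: "\<sigma> \<in> BC" using s PBC by blast
  have icB: "iv \<gamma> \<in> BC" using cB by simp
  define \<delta> where "\<delta> = g \<cdot> iv \<gamma> \<cdot> iv g"
  have cG: "\<gamma> \<in> G" using \<gamma> R_G by blast
  have \<delta>G: "\<delta> \<in> G" unfolding \<delta>_def
    using subgroup.m_closed[OF Gsg subgroup.m_closed[OF Gsg gG subgroup.m_inv_closed[OF Gsg cG]] subgroup.m_inv_closed[OF Gsg gG]] .
  have "fo \<delta> (g ` ?B)" unfolding \<delta>_def by (rule fo_conj[OF gB icB fo_iv[OF cB R_fo[OF \<gamma>]]])
  then have \<delta>R: "\<delta> \<in> R ?B" using \<delta>G gim unfolding Rist_fo by simp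
  have \<delta>B: "\<delta> \<in> BC" using \<delta>G GBC by blast
  define w where "w = \<sigma> \<cdot> \<delta> \<cdot> iv \<sigma>"
  have wB: "w \<in> BC" unfolding w_def using sB \<delta>B by simp
  have wfo: "fo w (\<sigma> ` ?B)" unfolding w_def by (rule fo_conj[OF sB \<delta>B R_fo[OF \<delta>R]])
  have gw: "g \<cdot> w = w \<cdot> g" using fo_commute[OF gB wB gU wfo] D1[OF s] by blast
  have cw: "\<gamma> \<cdot> w = w \<cdot> \<gamma>" using fo_commute[OF cB wB R_fo[OF \<gamma>] wfo] D2[OF s] by blast
  have x1: "iv g \<cdot> \<sigma> \<cdot> g \<in> H j" using gT unfolding T_def by blast
  have x2: "iv (g \<cdot> \<gamma>) \<cdot> \<sigma> \<cdot> (g \<cdot> \<gamma>) \<in> H j" using ggT unfolding T_def by blast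
  have "(iv g \<cdot> \<sigma> \<cdot> g) \<cdot> iv (iv (g \<cdot> \<gamma>) \<cdot> \<sigma> \<cdot> (g \<cdot> \<gamma>)) \<in> H j"
    using subgroup.m_closed[OF Hsg[OF j] x1 subgroup.m_inv_closed[OF Hsg[OF j] x2]] .
  moreover have "(iv g \<cdot> \<sigma> \<cdot> g) \<cdot> iv (iv (g \<cdot> \<gamma>) \<cdot> \<sigma> \<cdot> (g \<cdot> \<gamma>)) = iv g \<cdot> w \<cdot> g \<cdot> \<gamma>"
    unfolding w_def \<delta>_def by (rule BG.conj_word[OF gB cB sB])
  moreover have "iv g \<cdot> w \<cdot> g = w" by (rule BG.conj_cancel[OF gB wB gw])
  ultimately have "w \<cdot> \<gamma> \<in> H j" by simp
  then have "\<gamma> \<cdot> (\<sigma> \<cdot> \<delta> \<cdot> iv \<sigma>) \<in> H j" using cw unfolding w_def by simp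
  then show ?thesis unfolding A_def using \<gamma> \<delta>R by blast
qed

definition prodL :: "('a set \<Rightarrow> ('a \<Rightarrow> 'a)) \<Rightarrow> 'a set list \<Rightarrow> ('a \<Rightarrow> 'a)" where
  "prodL \<gamma> bs = foldr (\<lambda>b acc. \<gamma> b \<cdot> acc) bs e"

lemma prodL_Nil[simp]: "prodL \<gamma> [] = e" unfolding prodL_def by simp
lemma prodL_Cons[simp]: "prodL \<gamma> (b # bs) = \<gamma> b \<cdot> prodL \<gamma> bs" unfolding prodL_def by simp

lemma prodL_cong: "(\<And>b. b \<in> set bs \<Longrightarrow> \<gamma> b = \<gamma>' b) \<Longrightarrow> prodL \<gamma> bs = prodL \<gamma>' bs"
  by (induction bs) auto

lemma prodL_props:
  assumes "set bs \<subseteq> Bl" "\<forall>b\<in>set bs. \<gamma> b \<in> R b"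
  shows "prodL \<gamma> bs \<in> G \<and> fo (prodL \<gamma> bs) (\<Union>(set bs)) \<and> (\<forall>b'\<in>Bl. prodL \<gamma> bs ` b' = b')"
  using assms
proof (induction bs)
  case Nil
  have "\<forall>b'\<in>Bl. e ` b' = b'"
  proof
    fix b' assume "b' \<in> Bl"
    then have "\<And>x. x \<in> b' \<Longrightarrow> e x = x" using Bl_sub one_apply by blast
    then show "e ` b' = b'" by (rule image_fix)
  qed
  then show ?case using subgroup.one_closed[OF Gsg] fo_one by simp
next
  case (Cons b bs)
  have IH: "prodL \<gamma> bs \<in> G" "fo (prodL \<gamma> bs) (\<Union>(set bs))" "\<forall>b'\<in>Bl. prodL \<gamma> bs ` b' = b'"
    using Cons by auto
  have gb: "\<gamma> b \<in> R b" and bBl: "b \<in> Bl" using Cons.prems by auto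
  have gbB: "\<gamma> b \<in> BC" using gb R_BC by blast
  have QB: "prodL \<gamma> bs \<in> BC" using IH(1) GBC by blast
  have gbG: "\<gamma> b \<in> G" using gb R_G by blast
  have G1: "\<gamma> b \<cdot> prodL \<gamma> bs \<in> G" using subgroup.m_closed[OF Gsg gbG IH(1)] .
  have fo1: "fo (\<gamma> b \<cdot> prodL \<gamma> bs) (\<Union>(set (b # bs)))"
  proof -
    have s1: "b \<subseteq> \<Union>(set (b # bs))" and s2: "\<Union>(set bs) \<subseteq> \<Union>(set (b # bs))" by auto
    show ?thesis by (rule fo_mul[OF gbB QB fo_mono[OF R_fo[OF gb] s1] fo_mono[OF IH(2) s2]])
  qed
  have im1: "\<forall>b'\<in>Bl. (\<gamma> b \<cdot> prodL \<gamma> bs) ` b' = b'"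
  proof
    fix b' assume b': "b' \<in> Bl"
    have "\<gamma> b ` b' = b'"
    proof (cases "b' = b")
      case True
      then show ?thesis using fo_image_eq[OF gbB R_fo[OF gb] Bl_sub[OF bBl]] by simp
    next
      case False
      then have "b' \<inter> b = {}" using Bl_disj b' bBl by blast
      then have "\<forall>x\<in>b'. \<gamma> b x = x" using R_fo[OF gb] Bl_sub[OF b'] unfolding fixes_out_def by blast
      then show ?thesis by (intro image_fix) blast
    qed
    then show "(\<gamma> b \<cdot> prodL \<gamma> bs) ` b' = b'" using mul_image[OF gbB QB Bl_sub[OF b']] IH(3) b' by simp
  qed
  show ?case using G1 fo1 im1 by simp
qed

lemma prodL_Lg:
  assumes "set bs \<subseteq> Bl" "\<forall>b\<in>set bs. \<gamma> b \<in> R b"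
  shows "Lg (prodL \<gamma> bs)"
proof -
  have "\<Union>(set bs) \<subseteq> U" using assms(1) unfolding U_def by blast
  moreover have pp: "prodL \<gamma> bs \<in> G \<and> fo (prodL \<gamma> bs) (\<Union>(set bs)) \<and> (\<forall>b'\<in>Bl. prodL \<gamma> bs ` b' = b')"
    by (rule prodL_props[OF assms])
  ultimately have "fo (prodL \<gamma> bs) U" using fo_mono[of "prodL \<gamma> bs" "\<Union>(set bs)" U] by blast
  then show ?thesis using pp unfolding Lg_def by blast
qed

lemma prodL_upd:
  assumes "distinct bs" "set bs \<subseteq> Bl" "b \<in> set bs" "\<forall>c\<in>set bs. \<gamma> c \<in> R c" "\<delta> \<in> R b"
  shows "prodL (\<gamma>(b := \<delta>)) bs = prodL \<gamma> bs \<cdot> (iv (\<gamma> b) \<cdot> \<delta>)"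
  using assms
proof (induction bs)
  case Nil
  then show ?case by simp
next
  case (Cons c cs)
  have gc: "\<gamma> c \<in> R c" using Cons.prems(4) by simp
  have gcB: "\<gamma> c \<in> BC" using gc R_BC[of c] by blast
  have csp: "prodL \<gamma> cs \<in> G \<and> fo (prodL \<gamma> cs) (\<Union>(set cs)) \<and> (\<forall>b'\<in>Bl. prodL \<gamma> cs ` b' = b')"
  proof -
    have "set cs \<subseteq> Bl" "\<forall>b\<in>set cs. \<gamma> b \<in> R b" using Cons.prems(2,4) by auto
    then show ?thesis by (rule prodL_props)
  qed
  have QB: "prodL \<gamma> cs \<in> BC" using csp GBC by blast
  have gbR0: "\<gamma> b \<in> R b" using Cons.prems(3,4) by blast
  have gbB: "\<gamma> b \<in> BC" using gbR0 R_BC[of b] by blast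
  have dB: "\<delta> \<in> BC" using Cons.prems(5) R_BC[of b] by blast
  show ?case
  proof (cases "c = b")
    case True
    have bcs: "b \<notin> set cs" using Cons.prems True by auto
    have eq: "prodL (\<gamma>(b := \<delta>)) cs = prodL \<gamma> cs" using bcs by (intro prodL_cong) auto
    have disj: "b \<inter> \<Union>(set cs) = {}"
    proof -
      have "\<And>c'. c' \<in> set cs \<Longrightarrow> b \<inter> c' = {}"
        proof -
        fix c' assume c': "c' \<in> set cs"
        have "b \<in> Bl" "c' \<in> Bl" using Cons.prems(2) c' True by auto
        moreover have "b \<noteq> c'" using c' bcs by blast
        ultimately show "b \<inter> c' = {}" by (rule Bl_disj)
      qed
      then show ?thesis by blast
    qed
    have foQ: "fo (prodL \<gamma> cs) (\<Union>(set cs))" using csp by blast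
    have gbR: "\<gamma> b \<in> R b" using Cons.prems by auto
    have dR: "\<delta> \<in> R b" using Cons.prems by auto
    have igB: "iv (\<gamma> b) \<in> BC" using gbB by simp
    have c1: "iv (\<gamma> b) \<cdot> prodL \<gamma> cs = prodL \<gamma> cs \<cdot> iv (\<gamma> b)"
      by (rule fo_commute[OF igB QB fo_iv[OF gbB R_fo[OF gbR]] foQ disj])
    have c2: "\<delta> \<cdot> prodL \<gamma> cs = prodL \<gamma> cs \<cdot> \<delta>"
      by (rule fo_commute[OF dB QB R_fo[OF dR] foQ disj])
    have "prodL \<gamma> (c # cs) \<cdot> (iv (\<gamma> b) \<cdot> \<delta>) = \<gamma> b \<cdot> (prodL \<gamma> cs \<cdot> iv (\<gamma> b)) \<cdot> \<delta>"
      using True QB gbB dB by (simp add: BG.m_assoc)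
    also have "\<dots> = \<gamma> b \<cdot> (iv (\<gamma> b) \<cdot> prodL \<gamma> cs) \<cdot> \<delta>" using c1 by simp
    also have "\<dots> = prodL \<gamma> cs \<cdot> \<delta>" using QB gbB dB by (simp add: BG.m_assoc[symmetric])
    also have "\<dots> = \<delta> \<cdot> prodL \<gamma> cs" using c2 by simp
    also have "\<dots> = prodL (\<gamma>(b := \<delta>)) (c # cs)" by (simp only: prodL_Cons True fun_upd_same eq)
    finally show ?thesis by (rule sym)
  next
    case False
    have IH: "prodL (\<gamma>(b := \<delta>)) cs = prodL \<gamma> cs \<cdot> (iv (\<gamma> b) \<cdot> \<delta>)"
    proof (rule Cons.IH)
      show "distinct cs" "set cs \<subseteq> Bl" "b \<in> set cs" "\<forall>c\<in>set cs. \<gamma> c \<in> R c" "\<delta> \<in> R b"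
        using Cons.prems False by auto
    qed
    have "prodL (\<gamma>(b := \<delta>)) (c # cs) = \<gamma> c \<cdot> prodL (\<gamma>(b := \<delta>)) cs"
    proof -
      have "(\<gamma>(b := \<delta>)) c = \<gamma> c" using False by (rule fun_upd_other)
      then show ?thesis by (simp only: prodL_Cons)
    qed
    also have "\<dots> = \<gamma> c \<cdot> (prodL \<gamma> cs \<cdot> (iv (\<gamma> b) \<cdot> \<delta>))" by (simp only: IH)
    also have "\<dots> = prodL \<gamma> (c # cs) \<cdot> (iv (\<gamma> b) \<cdot> \<delta>)" using gcB QB gbB dB by (simp add: BG.m_assoc)
    finally show ?thesis .
  qed
qed

end


context group
begin

lemma canc1: "x \<in> carrier G \<Longrightarrow> y \<in> carrier G \<Longrightarrow> x \<otimes> (inv x \<otimes> y) = y"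
  by (simp add: m_assoc[symmetric])
lemma canc2: "x \<in> carrier G \<Longrightarrow> y \<in> carrier G \<Longrightarrow> inv x \<otimes> (x \<otimes> y) = y"
  by (simp add: m_assoc[symmetric])

lemma cjl:
  assumes "g \<in> carrier G" "x \<in> carrier G" "y \<in> carrier G"
  shows "inv g \<otimes> (x \<otimes> y) \<otimes> g = (inv g \<otimes> x \<otimes> g) \<otimes> (inv g \<otimes> y \<otimes> g)"
  using assms by (simp add: m_assoc canc1)

lemma cjr:
  assumes "g \<in> carrier G" "x \<in> carrier G" "y \<in> carrier G"
  shows "g \<otimes> (x \<otimes> y) \<otimes> inv g = (g \<otimes> x \<otimes> inv g) \<otimes> (g \<otimes> y \<otimes> inv g)"
  using assms by (simp add: m_assoc canc2)

lemma cj_comp: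
  assumes "k \<in> carrier G" "s \<in> carrier G" "X \<in> carrier G"
  shows "inv (inv k \<otimes> s \<otimes> k) \<otimes> X \<otimes> (inv k \<otimes> s \<otimes> k) = inv k \<otimes> (inv s \<otimes> (k \<otimes> X \<otimes> inv k) \<otimes> s) \<otimes> k"
  using assms by (simp add: m_assoc canc1 canc2 inv_mult_group)

lemma cj_cancel2:
  assumes "s \<in> carrier G" "b \<in> carrier G"
  shows "inv s \<otimes> (s \<otimes> b \<otimes> inv s) \<otimes> s = b"
  using assms by (simp add: m_assoc canc1 canc2)

lemma conj_cancel':
  assumes "g \<in> carrier G" "w \<in> carrier G" "g \<otimes> w = w \<otimes> g"
  shows "g \<otimes> w \<otimes> inv g = w"
proof -
  have "g \<otimes> w \<otimes> inv g = w \<otimes> g \<otimes> inv g" using assms(3) by simp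
  also have "\<dots> = w" using assms(1,2) by (simp add: m_assoc)
  finally show ?thesis .
qed

lemma comm_inv:
  assumes "x \<in> carrier G" "y \<in> carrier G" "x \<otimes> y = y \<otimes> x"
  shows "x \<otimes> inv y = inv y \<otimes> x"
proof -
  have "inv y \<otimes> (x \<otimes> y) \<otimes> inv y = inv y \<otimes> (y \<otimes> x) \<otimes> inv y" using assms(3) by simp
  then show ?thesis using assms(1,2) by (simp add: m_assoc canc1 canc2)
qed

lemma comm_of_one:
  assumes "x \<in> carrier G" "y \<in> carrier G" "x \<otimes> y \<otimes> inv x \<otimes> inv y = \<one>"
  shows "x \<otimes> y = y \<otimes> x"
proof -
  have "(x \<otimes> y \<otimes> inv x \<otimes> inv y) \<otimes> (y \<otimes> x) = x \<otimes> y" using assms(1,2) by (simp add: m_assoc canc2)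
  then show ?thesis using assms by simp
qed

lemma conj_mul_assoc:
  assumes "a \<in> carrier G" "p \<in> carrier G" "z \<in> carrier G"
  shows "(a \<otimes> p) \<otimes> z \<otimes> inv (a \<otimes> p) = a \<otimes> (p \<otimes> z \<otimes> inv p) \<otimes> inv a"
  using assms by (simp add: m_assoc inv_mult_group)

lemma comm4:
  assumes c: "a \<in> carrier G" "p \<in> carrier G" "q \<in> carrier G" "b \<in> carrier G"
    and h: "a \<otimes> p = p \<otimes> a" "p \<otimes> q = q \<otimes> p" "p \<otimes> b = b \<otimes> p" "q \<otimes> a = a \<otimes> q" "q \<otimes> b = b \<otimes> q"
  shows "(a \<otimes> p) \<otimes> (q \<otimes> b) \<otimes> inv (a \<otimes> p) \<otimes> inv (q \<otimes> b) = a \<otimes> b \<otimes> inv a \<otimes> inv b"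
proof -
  have pv: "p \<otimes> (q \<otimes> b) = (q \<otimes> b) \<otimes> p"
  proof -
    have "p \<otimes> (q \<otimes> b) = (p \<otimes> q) \<otimes> b" using c by (simp add: m_assoc)
    also have "\<dots> = q \<otimes> (p \<otimes> b)" using h(2) c by (simp add: m_assoc)
    also have "\<dots> = q \<otimes> (b \<otimes> p)" using h(3) by simp
    finally show ?thesis using c by (simp add: m_assoc)
  qed
  have s1: "(a \<otimes> p) \<otimes> (q \<otimes> b) \<otimes> inv (a \<otimes> p) = a \<otimes> (q \<otimes> b) \<otimes> inv a"
  proof -
    have "(a \<otimes> p) \<otimes> (q \<otimes> b) \<otimes> inv (a \<otimes> p) = a \<otimes> (p \<otimes> (q \<otimes> b)) \<otimes> (inv p \<otimes> inv a)"
      using c by (simp add: m_assoc inv_mult_group)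
    also have "\<dots> = a \<otimes> ((q \<otimes> b) \<otimes> p) \<otimes> (inv p \<otimes> inv a)" using pv by simp
    also have "\<dots> = a \<otimes> (q \<otimes> b) \<otimes> inv a" using c by (simp add: m_assoc canc1)
    finally show ?thesis .
  qed
  have qa: "q \<otimes> inv a = inv a \<otimes> q" using comm_inv[OF c(3) c(1) h(4)] .
  have qb: "q \<otimes> inv b = inv b \<otimes> q" using comm_inv[OF c(3) c(4) h(5)] .
  have t: "q \<otimes> (b \<otimes> (inv a \<otimes> (inv b \<otimes> inv q))) = b \<otimes> (inv a \<otimes> inv b)"
  proof -
    have "q \<otimes> (b \<otimes> (inv a \<otimes> (inv b \<otimes> inv q))) = (q \<otimes> b) \<otimes> (inv a \<otimes> (inv b \<otimes> inv q))"
      using c by (simp add: m_assoc)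
    also have "\<dots> = (b \<otimes> q) \<otimes> (inv a \<otimes> (inv b \<otimes> inv q))" using h(5) by simp
    also have "\<dots> = b \<otimes> ((q \<otimes> inv a) \<otimes> (inv b \<otimes> inv q))" using c by (simp add: m_assoc)
    also have "\<dots> = b \<otimes> ((inv a \<otimes> q) \<otimes> (inv b \<otimes> inv q))" using qa by simp
    also have "\<dots> = b \<otimes> (inv a \<otimes> ((q \<otimes> inv b) \<otimes> inv q))" using c by (simp add: m_assoc)
    also have "\<dots> = b \<otimes> (inv a \<otimes> ((inv b \<otimes> q) \<otimes> inv q))" using qb by simp
    also have "\<dots> = b \<otimes> (inv a \<otimes> inv b)" using c by (simp add: m_assoc)
    finally show ?thesis .
  qed
  have "a \<otimes> (q \<otimes> b) \<otimes> inv a \<otimes> inv (q \<otimes> b) = a \<otimes> (q \<otimes> (b \<otimes> (inv a \<otimes> (inv b \<otimes> inv q))))"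
    using c by (simp add: m_assoc inv_mult_group)
  also have "\<dots> = a \<otimes> (b \<otimes> (inv a \<otimes> inv b))" using t by simp
  also have "\<dots> = a \<otimes> b \<otimes> inv a \<otimes> inv b" using c by (simp add: m_assoc)
  finally show ?thesis using s1 by simp
qed

end


context csetup
begin

lemma conj_set_img: "conj_set \<Omega> g N = (\<lambda>h. g \<cdot> h \<cdot> iv g) ` N"
  unfolding conj_set_def by auto

lemma fc_triv:
  assumes s: "\<sigma> \<in> P" and y: "y \<in> R (W \<sigma>)" and Asub: "A' \<subseteq> R (W \<sigma>)"
    and cov: "cov_le (BijGroup \<Omega>) (R (W \<sigma>)) A' m" and comm: "\<forall>a\<in>A'. a \<cdot> y = y \<cdot> a"
  shows "y = e"
proof -
  let ?K = "R (W \<sigma>)"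
  obtain C where C: "C \<subseteq> ?K" "finite C" "card C \<le> m" "?K \<subseteq> (\<Union>c\<in>C. c <#\<^bsub>BijGroup \<Omega>\<^esub> A')"
    using cov unfolding cov_le_def by blast
  have yB: "y \<in> BC" using y R_BC by blast
  let ?cl = "{g \<cdot> y \<cdot> iv g | g. g \<in> ?K}"
  have sub: "?cl \<subseteq> (\<lambda>c. c \<cdot> y \<cdot> iv c) ` C"
  proof
    fix x assume "x \<in> ?cl"
    then obtain g where g: "g \<in> ?K" "x = g \<cdot> y \<cdot> iv g" by blast
    obtain c where c: "c \<in> C" "g \<in> c <#\<^bsub>BijGroup \<Omega>\<^esub> A'" using C(4) g(1) by blast
    obtain a where a: "a \<in> A'" "g = c \<cdot> a" using c(2) unfolding l_coset_def by blast
    have aB: "a \<in> BC" using a(1) Asub R_BC[of "W \<sigma>"] by blast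
    have cB: "c \<in> BC" using c(1) C(1) R_BC[of "W \<sigma>"] by blast
    have "a \<cdot> y \<cdot> iv a = y" using BG.conj_cancel'[OF aB yB] comm a(1) by blast
    moreover have "g \<cdot> y \<cdot> iv g = c \<cdot> (a \<cdot> y \<cdot> iv a) \<cdot> iv c" unfolding a(2)
      by (rule BG.conj_mul_assoc[OF cB aB yB])
    ultimately show "x \<in> (\<lambda>c. c \<cdot> y \<cdot> iv c) ` C" using g c by simp
  qed
  have fin: "finite ?cl" using finite_subset[OF sub] C(2) by blast
  have "card ?cl \<le> card ((\<lambda>c. c \<cdot> y \<cdot> iv c) ` C)" using sub C(2) by (intro card_mono) auto
  also have "\<dots> \<le> card C" by (rule card_image_le[OF C(2)])
  finally have "card ?cl \<le> m" using C(3) by linarith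
  then have "y \<in> FC_le \<Omega> m ?K" unfolding FC_le_def using y fin by blast
  then show ?thesis using fc[OF s] by blast
qed

lemma A_normalizes:
  assumes j: "j \<in> {1..n}" and s: "\<sigma> \<in> P" and a: "a \<in> A j \<sigma>" and z: "z \<in> H j \<inter> R (W \<sigma>)"
  shows "a \<cdot> z \<cdot> iv a \<in> H j \<inter> R (W \<sigma>)"
proof -
  let ?B = "W \<sigma>"
  obtain \<beta> where \<beta>: "\<beta> \<in> R ?B" "a \<cdot> (\<sigma> \<cdot> \<beta> \<cdot> iv \<sigma>) \<in> H j" and aR: "a \<in> R ?B"
    using a unfolding A_def by blast
  have sB: "\<sigma> \<in> BC" using s PBC by blast
  have aB: "a \<in> BC" and bB: "\<beta> \<in> BC" and zB: "z \<in> BC" using aR \<beta>(1) z R_BC by auto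
  define p where "p = \<sigma> \<cdot> \<beta> \<cdot> iv \<sigma>"
  have pB: "p \<in> BC" unfolding p_def using sB bB by simp
  have pfo: "fo p (\<sigma> ` ?B)" unfolding p_def by (rule fo_conj[OF sB bB R_fo[OF \<beta>(1)]])
  have zfo: "fo z ?B" using z R_fo by blast
  have "p \<cdot> z = z \<cdot> p" using fo_commute[OF pB zB pfo zfo] D2[OF s] by blast
  then have pz: "p \<cdot> z \<cdot> iv p = z" by (rule BG.conj_cancel'[OF pB zB])
  have w: "a \<cdot> p \<in> H j" using \<beta>(2) unfolding p_def .
  have "(a \<cdot> p) \<cdot> z \<cdot> iv (a \<cdot> p) \<in> H j"
    using subgroup.m_closed[OF Hsg[OF j] subgroup.m_closed[OF Hsg[OF j] w] subgroup.m_inv_closed[OF Hsg[OF j] w]] z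
    by blast
  moreover have "(a \<cdot> p) \<cdot> z \<cdot> iv (a \<cdot> p) = a \<cdot> z \<cdot> iv a"
    using BG.conj_mul_assoc[OF aB pB zB] pz by simp
  ultimately have "a \<cdot> z \<cdot> iv a \<in> H j" by simp
  moreover have "a \<cdot> z \<cdot> iv a \<in> R ?B"
    using subgroup.m_closed[OF R_sg subgroup.m_closed[OF R_sg aR] subgroup.m_inv_closed[OF R_sg aR]] z by blast
  ultimately show ?thesis by blast
qed

lemma A_normalizer:
  assumes j: "j \<in> {1..n}" and s: "\<sigma> \<in> P" and a: "a \<in> A j \<sigma>"
  shows "a \<in> normalizer_in \<Omega> (R (W \<sigma>)) (H j \<inter> R (W \<sigma>))"
proof -
  let ?N = "H j \<inter> R (W \<sigma>)"
  have aR: "a \<in> R (W \<sigma>)" using a A_sub by blast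
  have aB: "a \<in> BC" using aR R_BC by blast
  have ia: "iv a \<in> A j \<sigma>" using subgroup.m_inv_closed[OF A_sg[OF j s] a] .
  have "(\<lambda>h. a \<cdot> h \<cdot> iv a) ` ?N = ?N"
  proof
    show "(\<lambda>h. a \<cdot> h \<cdot> iv a) ` ?N \<subseteq> ?N" using A_normalizes[OF j s a] by blast
    show "?N \<subseteq> (\<lambda>h. a \<cdot> h \<cdot> iv a) ` ?N"
    proof
      fix z assume z: "z \<in> ?N"
      have zB: "z \<in> BC" using z R_BC by blast
      have "iv a \<cdot> z \<cdot> iv (iv a) \<in> ?N" using A_normalizes[OF j s ia z] .
      moreover have "a \<cdot> (iv a \<cdot> z \<cdot> iv (iv a)) \<cdot> iv a = z" using aB zB by (simp add: BG.m_assoc BG.canc1)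
      ultimately show "z \<in> (\<lambda>h. a \<cdot> h \<cdot> iv a) ` ?N" by (metis image_eqI)
    qed
  qed
  then show ?thesis unfolding normalizer_in_def conj_set_img using aR by blast
qed

lemma normalizer_mult:
  assumes K: "subgroup K (BijGroup \<Omega>)" and N: "N \<subseteq> BC"
    and g: "g \<in> normalizer_in \<Omega> K N" and h: "h \<in> normalizer_in \<Omega> K N"
  shows "g \<cdot> h \<in> normalizer_in \<Omega> K N"
proof -
  have gK: "g \<in> K" and hK: "h \<in> K" using g h unfolding normalizer_in_def by auto
  have gB: "g \<in> BC" and hB: "h \<in> BC" using gK hK subgroup.subset[OF K] by auto
  have eg: "(\<lambda>x. g \<cdot> x \<cdot> iv g) ` N = N" and eh: "(\<lambda>x. h \<cdot> x \<cdot> iv h) ` N = N"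
    using g h unfolding normalizer_in_def conj_set_img by auto
  have "(\<lambda>x. (g \<cdot> h) \<cdot> x \<cdot> iv (g \<cdot> h)) ` N = (\<lambda>x. g \<cdot> x \<cdot> iv g) ` ((\<lambda>x. h \<cdot> x \<cdot> iv h) ` N)"
  proof -
    have "\<And>x. x \<in> N \<Longrightarrow> (g \<cdot> h) \<cdot> x \<cdot> iv (g \<cdot> h) = g \<cdot> (h \<cdot> x \<cdot> iv h) \<cdot> iv g"
      using gB hB N by (intro BG.conj_mul_assoc) auto
    then show ?thesis by (simp add: image_image cong: image_cong)
  qed
  then have "(\<lambda>x. (g \<cdot> h) \<cdot> x \<cdot> iv (g \<cdot> h)) ` N = N" using eg eh by simp
  moreover have "g \<cdot> h \<in> K" using subgroup.m_closed[OF K gK hK] .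
  ultimately show ?thesis unfolding normalizer_in_def conj_set_img by blast
qed

lemma index_from_cov:
  assumes K: "subgroup K (BijGroup \<Omega>)" and Asg: "subgroup A' (BijGroup \<Omega>)" and AK: "A' \<subseteq> K"
    and AN: "A' \<subseteq> Nz" and NzK: "Nz \<subseteq> K" and Nzm: "\<And>g h. g \<in> Nz \<Longrightarrow> h \<in> Nz \<Longrightarrow> g \<cdot> h \<in> Nz"
    and cov: "cov_le (BijGroup \<Omega>) K A' m"
  shows "index_le \<Omega> K Nz m"
proof -
  obtain C where C: "C \<subseteq> K" "finite C" "card C \<le> m" "K \<subseteq> (\<Union>c\<in>C. c <#\<^bsub>BijGroup \<Omega>\<^esub> A')"
    using cov unfolding cov_le_def by blast
  have KB: "K \<subseteq> BC" using subgroup.subset[OF K] .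
  have sub: "rcosets\<^bsub>(BijGroup \<Omega>)\<lparr>carrier := K\<rparr>\<^esub> Nz \<subseteq> (\<lambda>c. Nz #>\<^bsub>BijGroup \<Omega>\<^esub> iv c) ` C"
  proof
    fix X assume "X \<in> rcosets\<^bsub>(BijGroup \<Omega>)\<lparr>carrier := K\<rparr>\<^esub> Nz"
    then obtain x where x: "x \<in> K" "X = Nz #>\<^bsub>BijGroup \<Omega>\<^esub> x" unfolding RCOSETS_def by auto
    have ix: "iv x \<in> K" using subgroup.m_inv_closed[OF K x(1)] .
    obtain c where c: "c \<in> C" "iv x \<in> c <#\<^bsub>BijGroup \<Omega>\<^esub> A'" using C(4) ix by blast
    obtain a where a: "a \<in> A'" "iv x = c \<cdot> a" using c(2) unfolding l_coset_def by blast
    have aB: "a \<in> BC" and cB: "c \<in> BC" and xB: "x \<in> BC" using a(1) AK C(1) c(1) KB x(1) by auto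
    have xeq: "x = iv a \<cdot> iv c"
    proof -
      have "x = iv (iv x)" using xB by simp
      also have "\<dots> = iv a \<cdot> iv c" using a(2) aB cB by (simp add: BG.inv_mult_group)
      finally show ?thesis .
    qed
    have ia: "iv a \<in> Nz" using subgroup.m_inv_closed[OF Asg a(1)] AN by blast
    have aN: "a \<in> Nz" using a(1) AN by blast
    have "Nz #>\<^bsub>BijGroup \<Omega>\<^esub> x = Nz #>\<^bsub>BijGroup \<Omega>\<^esub> iv c"
    proof
      show "Nz #>\<^bsub>BijGroup \<Omega>\<^esub> x \<subseteq> Nz #>\<^bsub>BijGroup \<Omega>\<^esub> iv c"
      proof
        fix y assume "y \<in> Nz #>\<^bsub>BijGroup \<Omega>\<^esub> x"
        then obtain z where z: "z \<in> Nz" "y = z \<cdot> x" unfolding r_coset_def by blast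
        have zB: "z \<in> BC" using z(1) NzK KB by blast
        have "y = (z \<cdot> iv a) \<cdot> iv c" using z(2) xeq zB aB cB by (simp add: BG.m_assoc)
        moreover have "z \<cdot> iv a \<in> Nz" using Nzm[OF z(1) ia] .
        ultimately show "y \<in> Nz #>\<^bsub>BijGroup \<Omega>\<^esub> iv c" unfolding r_coset_def by blast
      qed
      show "Nz #>\<^bsub>BijGroup \<Omega>\<^esub> iv c \<subseteq> Nz #>\<^bsub>BijGroup \<Omega>\<^esub> x"
      proof
        fix y assume "y \<in> Nz #>\<^bsub>BijGroup \<Omega>\<^esub> iv c"
        then obtain z where z: "z \<in> Nz" "y = z \<cdot> iv c" unfolding r_coset_def by blast
        have zB: "z \<in> BC" using z(1) NzK KB by blast
        have "y = (z \<cdot> a) \<cdot> x" using z(2) xeq zB aB cB by (simp add: BG.m_assoc BG.canc1)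
        moreover have "z \<cdot> a \<in> Nz" using Nzm[OF z(1) aN] .
        ultimately show "y \<in> Nz #>\<^bsub>BijGroup \<Omega>\<^esub> x" unfolding r_coset_def by blast
      qed
    qed
    then show "X \<in> (\<lambda>c. Nz #>\<^bsub>BijGroup \<Omega>\<^esub> iv c) ` C" using x(2) c(1) by blast
  qed
  have fin: "finite (rcosets\<^bsub>(BijGroup \<Omega>)\<lparr>carrier := K\<rparr>\<^esub> Nz)" using finite_subset[OF sub] C(2) by blast
  have "card (rcosets\<^bsub>(BijGroup \<Omega>)\<lparr>carrier := K\<rparr>\<^esub> Nz) \<le> card ((\<lambda>c. Nz #>\<^bsub>BijGroup \<Omega>\<^esub> iv c) ` C)"
    using sub C(2) by (intro card_mono) auto
  also have "\<dots> \<le> card C" by (rule card_image_le[OF C(2)])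
  finally show ?thesis unfolding index_le_def using fin C(3) by linarith
qed

end


context csetup
begin

lemma Lg_iv_image:
  assumes k: "Lg k" and b: "b \<in> Bl"
  shows "iv k ` b = b"
proof -
  have kB: "k \<in> BC" using k GBC unfolding Lg_def by blast
  have kb: "k ` b = b" using k b unfolding Lg_def by blast
  have "iv k ` (k ` b) = b" using iv_f[OF kB] Bl_sub[OF b] by (force simp: image_iff)
  then show ?thesis using kb by simp
qed

lemma commutator_key:
  assumes j: "j \<in> {1..n}" and s: "\<sigma> \<in> P" and k: "Lg k" and kT: "k \<in> T j \<sigma>"
    and \<alpha>: "\<alpha> \<in> R (W \<sigma>)" and \<beta>: "\<beta> \<in> R (W \<sigma>)" and u: "\<alpha> \<cdot> (\<sigma> \<cdot> \<beta> \<cdot> iv \<sigma>) \<in> H j"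
    and \<alpha>': "\<alpha>' \<in> R (W \<sigma>)" and \<beta>': "\<beta>' \<in> R (W \<sigma>)" and z': "\<alpha>' \<cdot> (\<sigma> \<cdot> \<beta>' \<cdot> iv \<sigma>) \<in> H j"
    and N1: "H j \<inter> R (W \<sigma>) = {e}"
  shows "\<alpha> \<cdot> (iv k \<cdot> \<beta>' \<cdot> k) = (iv k \<cdot> \<beta>' \<cdot> k) \<cdot> \<alpha>"
proof -
  let ?B = "W \<sigma>"
  have Bbl: "?B \<in> Bl" using s unfolding Bl_def by blast
  have kG: "k \<in> G" and kU: "fo k U" and kim: "k ` ?B = ?B" using k Bbl unfolding Lg_def by auto
  have kB: "k \<in> BC" using kG GBC by blast
  have sB: "\<sigma> \<in> BC" using s PBC by blast
  have aB: "\<alpha> \<in> BC" and bB: "\<beta> \<in> BC" and a'B: "\<alpha>' \<in> BC" and b'B: "\<beta>' \<in> BC"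
    using \<alpha> \<beta> \<alpha>' \<beta>' R_BC by auto
  define p where "p = \<sigma> \<cdot> \<beta> \<cdot> iv \<sigma>"
  define p' where "p' = \<sigma> \<cdot> \<beta>' \<cdot> iv \<sigma>"
  define x where "x = iv k \<cdot> \<sigma> \<cdot> k"
  define \<alpha>'' where "\<alpha>'' = k \<cdot> \<alpha>' \<cdot> iv k"
  define q where "q = iv \<sigma> \<cdot> \<alpha>'' \<cdot> \<sigma>"
  define b' where "b' = iv k \<cdot> \<beta>' \<cdot> k"
  have pB: "p \<in> BC" and p'B: "p' \<in> BC" and xB: "x \<in> BC" and a''B: "\<alpha>'' \<in> BC" and qB: "q \<in> BC" and b'B': "b' \<in> BC"
    unfolding p_def p'_def x_def \<alpha>''_def q_def b'_def using sB kB aB bB a'B b'B by auto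
  have pfo: "fo p (\<sigma> ` ?B)" unfolding p_def by (rule fo_conj[OF sB bB R_fo[OF \<beta>]])
  have p'fo: "fo p' (\<sigma> ` ?B)" unfolding p'_def by (rule fo_conj[OF sB b'B R_fo[OF \<beta>']])
  have a''fo: "fo \<alpha>'' ?B" using fo_conj[OF kB a'B R_fo[OF \<alpha>']] kim unfolding \<alpha>''_def by simp
  have qfo: "fo q (iv \<sigma> ` ?B)"
  proof -
    have "fo (iv \<sigma> \<cdot> \<alpha>'' \<cdot> iv (iv \<sigma>)) (iv \<sigma> ` ?B)" by (rule fo_conj[OF _ a''B a''fo]) (use sB in simp)
    then show ?thesis unfolding q_def using sB by simp
  qed
  have b'fo: "fo b' ?B"
  proof -
    have "fo (iv k \<cdot> \<beta>' \<cdot> iv (iv k)) (iv k ` ?B)" by (rule fo_conj[OF _ b'B R_fo[OF \<beta>']]) (use kB in simp)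
    then show ?thesis unfolding b'_def using kB Lg_iv_image[OF k Bbl] by simp
  qed
  have b'G: "b' \<in> G" unfolding b'_def
    using subgroup.m_closed[OF Gsg subgroup.m_closed[OF Gsg subgroup.m_inv_closed[OF Gsg kG]] kG] \<beta>' R_G by blast
  have b'R: "b' \<in> R ?B" using b'G b'fo unfolding Rist_fo by blast
  have kp': "k \<cdot> p' = p' \<cdot> k" using fo_commute[OF kB p'B kU p'fo] D1[OF s] by blast
  have kq: "k \<cdot> q = q \<cdot> k" using fo_commute[OF kB qB kU qfo] D5[OF s] by blast
  have h1: "\<alpha> \<cdot> p = p \<cdot> \<alpha>" using fo_commute[OF aB pB R_fo[OF \<alpha>] pfo] D2[OF s] by blast
  have h2: "p \<cdot> q = q \<cdot> p" using fo_commute[OF pB qB pfo qfo] D4[OF s] by blast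
  have h3: "p \<cdot> b' = b' \<cdot> p" using fo_commute[OF pB b'B' pfo b'fo] D2[OF s] by blast
  have h4: "q \<cdot> \<alpha> = \<alpha> \<cdot> q" using fo_commute[OF qB aB qfo R_fo[OF \<alpha>]] D3[OF s] by blast
  have h5: "q \<cdot> b' = b' \<cdot> q" using fo_commute[OF qB b'B' qfo b'fo] D3[OF s] by blast
  have xH: "x \<in> H j" using kT unfolding T_def x_def by blast
  have vH: "iv x \<cdot> (\<alpha>' \<cdot> p') \<cdot> x \<in> H j"
    using subgroup.m_closed[OF Hsg[OF j] subgroup.m_closed[OF Hsg[OF j] subgroup.m_inv_closed[OF Hsg[OF j] xH]] xH]
      z' unfolding p'_def by blast
  have ap'B: "\<alpha>' \<cdot> p' \<in> BC" using a'B p'B by simp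
  have "iv x \<cdot> (\<alpha>' \<cdot> p') \<cdot> x = iv k \<cdot> (iv \<sigma> \<cdot> (k \<cdot> (\<alpha>' \<cdot> p') \<cdot> iv k) \<cdot> \<sigma>) \<cdot> k"
    unfolding x_def by (rule BG.cj_comp[OF kB sB ap'B])
  also have "k \<cdot> (\<alpha>' \<cdot> p') \<cdot> iv k = \<alpha>'' \<cdot> (k \<cdot> p' \<cdot> iv k)"
    unfolding \<alpha>''_def by (rule BG.cjr[OF kB a'B p'B])
  also have "k \<cdot> p' \<cdot> iv k = p'" by (rule BG.conj_cancel'[OF kB p'B kp'])
  also have "iv \<sigma> \<cdot> (\<alpha>'' \<cdot> p') \<cdot> \<sigma> = q \<cdot> (iv \<sigma> \<cdot> p' \<cdot> \<sigma>)"
    unfolding q_def by (rule BG.cjl[OF sB a''B p'B])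
  also have "iv \<sigma> \<cdot> p' \<cdot> \<sigma> = \<beta>'" unfolding p'_def by (rule BG.cj_cancel2[OF sB b'B])
  also have "iv k \<cdot> (q \<cdot> \<beta>') \<cdot> k = (iv k \<cdot> q \<cdot> k) \<cdot> b'"
    unfolding b'_def by (rule BG.cjl[OF kB qB b'B])
  also have "iv k \<cdot> q \<cdot> k = q" by (rule BG.conj_cancel[OF kB qB kq])
  finally have veq: "iv x \<cdot> (\<alpha>' \<cdot> p') \<cdot> x = q \<cdot> b'" .
  have uH: "\<alpha> \<cdot> p \<in> H j" using u unfolding p_def .
  have v'H: "q \<cdot> b' \<in> H j" using vH veq by simp
  have "(\<alpha> \<cdot> p) \<cdot> (q \<cdot> b') \<cdot> iv (\<alpha> \<cdot> p) \<cdot> iv (q \<cdot> b') \<in> H j"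
    using subgroup.m_closed[OF Hsg[OF j] subgroup.m_closed[OF Hsg[OF j] subgroup.m_closed[OF Hsg[OF j] uH v'H]
      subgroup.m_inv_closed[OF Hsg[OF j] uH]] subgroup.m_inv_closed[OF Hsg[OF j] v'H]] .
  moreover have "(\<alpha> \<cdot> p) \<cdot> (q \<cdot> b') \<cdot> iv (\<alpha> \<cdot> p) \<cdot> iv (q \<cdot> b') = \<alpha> \<cdot> b' \<cdot> iv \<alpha> \<cdot> iv b'"
    by (rule BG.comm4[OF aB pB qB b'B' h1 h2 h3 h4 h5])
  ultimately have cH: "\<alpha> \<cdot> b' \<cdot> iv \<alpha> \<cdot> iv b' \<in> H j" by simp
  have cR: "\<alpha> \<cdot> b' \<cdot> iv \<alpha> \<cdot> iv b' \<in> R ?B"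
    using subgroup.m_closed[OF R_sg subgroup.m_closed[OF R_sg subgroup.m_closed[OF R_sg \<alpha> b'R]
      subgroup.m_inv_closed[OF R_sg \<alpha>]] subgroup.m_inv_closed[OF R_sg b'R]] .
  have "\<alpha> \<cdot> b' \<cdot> iv \<alpha> \<cdot> iv b' = e" using cH cR N1 by blast
  then show ?thesis using BG.comm_of_one[OF aB b'B'] unfolding b'_def by blast
qed

end


context csetup
begin

lemma conj_R:
  assumes k: "Lg k" and b: "b \<in> Bl" and \<beta>: "\<beta> \<in> R b"
  shows "iv k \<cdot> \<beta> \<cdot> k \<in> R b"
proof -
  have kG: "k \<in> G" using k unfolding Lg_def by blast
  have kB: "k \<in> BC" using kG GBC by blast
  have bB: "\<beta> \<in> BC" using \<beta> R_BC by blast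
  have "fo (iv k \<cdot> \<beta> \<cdot> iv (iv k)) (iv k ` b)" by (rule fo_conj[OF _ bB R_fo[OF \<beta>]]) (use kB in simp)
  then have fo1: "fo (iv k \<cdot> \<beta> \<cdot> k) b" using kB Lg_iv_image[OF k b] by simp
  have "iv k \<cdot> \<beta> \<cdot> k \<in> G"
    using subgroup.m_closed[OF Gsg subgroup.m_closed[OF Gsg subgroup.m_inv_closed[OF Gsg kG]] kG] \<beta> R_G by blast
  then show ?thesis using fo1 unfolding Rist_fo by blast
qed

lemma part2:
  assumes j: "j \<in> {1..n}" and s: "\<sigma> \<in> P" and k: "Lg k" and kT: "k \<in> T j \<sigma>"
    and cov: "cov_le (BijGroup \<Omega>) (R (W \<sigma>)) (A j \<sigma>) m"
  shows "\<exists>N. subgroup N (BijGroup \<Omega>) \<and> N \<subseteq> H j \<and> N \<noteq> {e} \<and> N \<subseteq> R (W \<sigma>) \<and>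
           index_le \<Omega> (R (W \<sigma>)) (normalizer_in \<Omega> (R (W \<sigma>)) N) m"
proof (intro exI conjI)
  let ?B = "W \<sigma>"
  let ?N = "H j \<inter> R ?B"
  have Bbl: "?B \<in> Bl" using s unfolding Bl_def by blast
  show "subgroup ?N (BijGroup \<Omega>)" by (rule BG.subgroups_Inter_pair[OF Hsg[OF j] R_sg])
  show "?N \<subseteq> H j" "?N \<subseteq> R ?B" by auto
  have NB: "?N \<subseteq> BC" using R_BC by blast
  show "index_le \<Omega> (R ?B) (normalizer_in \<Omega> (R ?B) ?N) m"
  proof (rule index_from_cov[OF R_sg A_sg[OF j s] A_sub])
    show "A j \<sigma> \<subseteq> normalizer_in \<Omega> (R ?B) ?N" using A_normalizer[OF j s] by blast
    show "normalizer_in \<Omega> (R ?B) ?N \<subseteq> R ?B" unfolding normalizer_in_def by blast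
    show "\<And>g h. g \<in> normalizer_in \<Omega> (R ?B) ?N \<Longrightarrow> h \<in> normalizer_in \<Omega> (R ?B) ?N \<Longrightarrow>
        g \<cdot> h \<in> normalizer_in \<Omega> (R ?B) ?N"
      by (rule normalizer_mult[OF R_sg NB])
    show "cov_le (BijGroup \<Omega>) (R ?B) (A j \<sigma>) m" by (rule cov)
  qed
  show "?N \<noteq> {e}"
  proof
    assume N1: "?N = {e}"
    have kB: "k \<in> BC" using k GBC unfolding Lg_def by blast
    have claim1: "\<And>\<alpha>' \<beta>'. \<alpha>' \<in> R ?B \<Longrightarrow> \<beta>' \<in> R ?B \<Longrightarrow> \<alpha>' \<cdot> (\<sigma> \<cdot> \<beta>' \<cdot> iv \<sigma>) \<in> H j \<Longrightarrow> \<beta>' = e"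
    proof -
      fix \<alpha>' \<beta>' assume a': "\<alpha>' \<in> R ?B" and b': "\<beta>' \<in> R ?B" and z': "\<alpha>' \<cdot> (\<sigma> \<cdot> \<beta>' \<cdot> iv \<sigma>) \<in> H j"
      have yR: "iv k \<cdot> \<beta>' \<cdot> k \<in> R ?B" by (rule conj_R[OF k Bbl b'])
      have "\<forall>a\<in>A j \<sigma>. a \<cdot> (iv k \<cdot> \<beta>' \<cdot> k) = (iv k \<cdot> \<beta>' \<cdot> k) \<cdot> a"
      proof
        fix a assume a: "a \<in> A j \<sigma>"
        then obtain \<beta> where \<beta>: "\<beta> \<in> R ?B" "a \<cdot> (\<sigma> \<cdot> \<beta> \<cdot> iv \<sigma>) \<in> H j" and aR: "a \<in> R ?B"
          unfolding A_def by blast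
        show "a \<cdot> (iv k \<cdot> \<beta>' \<cdot> k) = (iv k \<cdot> \<beta>' \<cdot> k) \<cdot> a"
          by (rule commutator_key[OF j s k kT aR \<beta>(1) \<beta>(2) a' b' z' N1])
      qed
      then have y1: "iv k \<cdot> \<beta>' \<cdot> k = e" using fc_triv[OF s yR A_sub cov] by blast
      have bB: "\<beta>' \<in> BC" using b' R_BC by blast
      have "\<beta>' = k \<cdot> (iv k \<cdot> \<beta>' \<cdot> k) \<cdot> iv k" using kB bB by (simp add: BG.m_assoc BG.canc1)
      then show "\<beta>' = e" using y1 kB by simp
    qed
    have Ae: "\<And>a. a \<in> A j \<sigma> \<Longrightarrow> a = e"
    proof -
      fix a assume a: "a \<in> A j \<sigma>"
      then obtain \<beta> where \<beta>: "\<beta> \<in> R ?B" "a \<cdot> (\<sigma> \<cdot> \<beta> \<cdot> iv \<sigma>) \<in> H j" and aR: "a \<in> R ?B"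
        unfolding A_def by blast
      have "\<beta> = e" using claim1[OF aR \<beta>(1) \<beta>(2)] .
      have aB: "a \<in> BC" using aR R_BC[of ?B] by blast
      have sB: "\<sigma> \<in> BC" using PBC s by blast
      have "a \<cdot> (\<sigma> \<cdot> e \<cdot> iv \<sigma>) = a" using aB sB by simp
      then have "a \<in> H j" using \<beta>(2) \<open>\<beta> = e\<close> by simp
      then show "a = e" using aR N1 by blast
    qed
    have "\<forall>y\<in>R ?B. y = e"
    proof
      fix y assume y: "y \<in> R ?B"
      have yB: "y \<in> BC" using y R_BC[of ?B] by blast
      have "\<forall>a\<in>A j \<sigma>. a \<cdot> y = y \<cdot> a"
      proof
        fix a assume "a \<in> A j \<sigma>"
        then have "a = e" by (rule Ae)
        then show "a \<cdot> y = y \<cdot> a" using yB by simp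
      qed
      then show "y = e" using fc_triv[OF s y A_sub cov] by blast
    qed
    then have "R ?B = {e}" using subgroup.one_closed[OF R_sg] by blast
    then show False using ntriv[OF s] by blast
  qed
qed

end


context csetup
begin

lemma finBl: "finite Bl" unfolding Bl_def using finP by simp

lemma conf_T:
  assumes g: "g \<in> G"
  shows "\<exists>j\<in>{1..n}. \<exists>\<sigma>\<in>P. g \<in> T j \<sigma>"
proof -
  obtain j where j: "j \<in> {1..n}" "conj_set \<Omega> g (H j) \<inter> P \<noteq> {}" using confG[OF g] by blast
  then obtain \<sigma> h where h: "h \<in> H j" "\<sigma> = g \<cdot> h \<cdot> iv g" "\<sigma> \<in> P" unfolding conj_set_def by blast
  have gB: "g \<in> BC" using g GBC by blast
  have hB: "h \<in> BC" using h(1) HBC[OF j(1)] by blast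
  have "iv g \<cdot> \<sigma> \<cdot> g = h" unfolding h(2) using gB hB by (simp add: BG.m_assoc BG.canc1 BG.canc2)
  then have "g \<in> T j \<sigma>" unfolding T_def using gB h(1) by simp
  then show ?thesis using j(1) h(3) by blast
qed

lemma exists_good:
  "\<exists>j \<sigma> k. j \<in> {1..n} \<and> \<sigma> \<in> P \<and> Lg k \<and> k \<in> T j \<sigma> \<and> cov_le (BijGroup \<Omega>) (R (W \<sigma>)) (A j \<sigma>) m"
proof (rule ccontr)
  assume nex: "\<not> ?thesis"
  define Pc where "Pc = {p \<in> {1..n} \<times> P. \<exists>k. Lg k \<and> k \<in> T (fst p) (snd p)}"
  have Pcn: "\<And>j \<sigma>. (j,\<sigma>) \<in> Pc \<Longrightarrow> \<not> cov_le (BijGroup \<Omega>) (R (W \<sigma>)) (A j \<sigma>) m"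
    using nex unfolding Pc_def by auto
  have finPc: "finite Pc" unfolding Pc_def using finP by (auto intro: finite_subset[of _ "{1..n} \<times> P"])
  have cardPc: "card Pc \<le> m"
  proof -
    have "card Pc \<le> card ({1..n} \<times> P)" unfolding Pc_def using finP by (intro card_mono) auto
    also have "\<dots> = n * card P" by (simp add: card_cartesian_product)
    finally show ?thesis .
  qed
  define S where "S = (\<lambda>b. (\<lambda>p. A (fst p) (snd p)) ` {p \<in> Pc. W (snd p) = b})"
  have "\<forall>b\<in>Bl. \<exists>F. F \<subseteq> R b \<and> finite F \<and> F \<noteq> {} \<and>
      (\<forall>A'\<in>S b. \<forall>c\<in>R b. Suc m * card (F \<inter> (c <#\<^bsub>BijGroup \<Omega>\<^esub> A')) \<le> card F)"
  proof
    fix b assume b: "b \<in> Bl"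
    have finS: "finite (S b)" unfolding S_def using finPc by simp
    have hS: "\<forall>A'\<in>S b. subgroup A' (BijGroup \<Omega>) \<and> A' \<subseteq> R b \<and> \<not> cov_le (BijGroup \<Omega>) (R b) A' m"
    proof
      fix A' assume "A' \<in> S b"
      then obtain j \<sigma> where p: "(j,\<sigma>) \<in> Pc" "W \<sigma> = b" "A' = A j \<sigma>" unfolding S_def by auto
      have js: "j \<in> {1..n}" "\<sigma> \<in> P" using p(1) unfolding Pc_def by auto
      show "subgroup A' (BijGroup \<Omega>) \<and> A' \<subseteq> R b \<and> \<not> cov_le (BijGroup \<Omega>) (R b) A' m"
        using A_sg[OF js] A_sub[of j \<sigma>] Pcn[OF p(1)] p(2,3) by simp
    qed
    show "\<exists>F. F \<subseteq> R b \<and> finite F \<and> F \<noteq> {} \<and>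
      (\<forall>A'\<in>S b. \<forall>c\<in>R b. Suc m * card (F \<inter> (c <#\<^bsub>BijGroup \<Omega>\<^esub> A')) \<le> card F)"
      by (rule BG.lemmaA[OF R_sg finS hS])
  qed
  then obtain F where F: "\<forall>b\<in>Bl. F b \<subseteq> R b \<and> finite (F b) \<and> F b \<noteq> {} \<and>
      (\<forall>A'\<in>S b. \<forall>c\<in>R b. Suc m * card (F b \<inter> (c <#\<^bsub>BijGroup \<Omega>\<^esub> A')) \<le> card (F b))"
    by metis
  obtain bs where bs: "set bs = Bl" "distinct bs" using finite_distinct_list[OF finBl] by blast
  define \<Gamma> where "\<Gamma> = PiE Bl F"
  have card\<Gamma>: "card \<Gamma> = (\<Prod>b\<in>Bl. card (F b))" unfolding \<Gamma>_def using finBl by (rule card_PiE)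
  have pos: "card \<Gamma> > 0" unfolding card\<Gamma> using F finBl by (simp add: prod_pos card_gt_0_iff)
  have finG: "finite \<Gamma>" unfolding \<Gamma>_def using finBl F by (intro finite_PiE) auto
  have FR: "\<And>b. b \<in> Bl \<Longrightarrow> F b \<subseteq> R b" using F by blast
  have \<Gamma>R: "\<And>\<gamma>. \<gamma> \<in> \<Gamma> \<Longrightarrow> \<forall>b\<in>set bs. \<gamma> b \<in> R b"
  proof
    fix \<gamma> b assume "\<gamma> \<in> \<Gamma>" "b \<in> set bs"
    then have "\<gamma> b \<in> F b" "b \<in> Bl" unfolding \<Gamma>_def using bs(1) PiE_mem by auto
    then show "\<gamma> b \<in> R b" using FR by blast
  qed
  have LgG: "\<And>\<gamma>. \<gamma> \<in> \<Gamma> \<Longrightarrow> Lg (prodL \<gamma> bs)" using prodL_Lg bs(1) \<Gamma>R by blast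
  define \<Gamma>p where "\<Gamma>p = (\<lambda>p. {\<gamma>\<in>\<Gamma>. prodL \<gamma> bs \<in> T (fst p) (snd p)})"
  have cover: "\<Gamma> \<subseteq> (\<Union>p\<in>Pc. \<Gamma>p p)"
  proof
    fix \<gamma> assume g: "\<gamma> \<in> \<Gamma>"
    have "prodL \<gamma> bs \<in> G" using LgG[OF g] unfolding Lg_def by blast
    then obtain j \<sigma> where js: "j \<in> {1..n}" "\<sigma> \<in> P" "prodL \<gamma> bs \<in> T j \<sigma>" using conf_T by blast
    have "(j,\<sigma>) \<in> Pc" unfolding Pc_def using js LgG[OF g] by auto
    moreover have "\<gamma> \<in> \<Gamma>p (j,\<sigma>)" unfolding \<Gamma>p_def using g js by auto
    ultimately show "\<gamma> \<in> (\<Union>p\<in>Pc. \<Gamma>p p)" by blast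
  qed
  have bound: "\<And>p. p \<in> Pc \<Longrightarrow> Suc m * card (\<Gamma>p p) \<le> card \<Gamma>"
  proof -
    fix p assume pP: "p \<in> Pc"
    obtain j \<sigma> where p: "p = (j,\<sigma>)" by (cases p)
    have js: "j \<in> {1..n}" "\<sigma> \<in> P" using pP p unfolding Pc_def by auto
    define b0 where "b0 = W \<sigma>"
    have b0: "b0 \<in> Bl" unfolding b0_def Bl_def using js by blast
    have b0bs: "b0 \<in> set bs" using b0 bs(1) by simp
    have AS: "A j \<sigma> \<in> S b0" unfolding S_def b0_def using pP p by force
    have Fb0: "F b0 \<subseteq> R b0" "finite (F b0)" using F b0 by auto
    have Fbound: "\<forall>c\<in>R b0. Suc m * card (F b0 \<inter> (c <#\<^bsub>BijGroup \<Omega>\<^esub> A j \<sigma>)) \<le> card (F b0)"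
      using F b0 AS by blast
    define \<Gamma>' where "\<Gamma>' = PiE (Bl - {b0}) F"
    define Q where "Q = (\<lambda>\<rho>. {\<gamma> \<in> \<Gamma>p p. \<forall>b\<in>Bl-{b0}. \<gamma> b = \<rho> b})"
    have finG': "finite \<Gamma>'" unfolding \<Gamma>'_def using finBl F by (intro finite_PiE) auto
    have sub: "\<Gamma>p p \<subseteq> (\<Union>\<rho>\<in>\<Gamma>'. Q \<rho>)"
    proof
      fix \<gamma> assume g: "\<gamma> \<in> \<Gamma>p p"
      then have "\<gamma> \<in> \<Gamma>" unfolding \<Gamma>p_def by blast
      then have "restrict \<gamma> (Bl - {b0}) \<in> \<Gamma>'" unfolding \<Gamma>_def \<Gamma>'_def by (auto simp: PiE_iff)
      moreover have "\<gamma> \<in> Q (restrict \<gamma> (Bl - {b0}))" unfolding Q_def using g by auto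
      ultimately show "\<gamma> \<in> (\<Union>\<rho>\<in>\<Gamma>'. Q \<rho>)" by blast
    qed
    have each: "\<And>\<rho>. \<rho> \<in> \<Gamma>' \<Longrightarrow> Suc m * card (Q \<rho>) \<le> card (F b0)"
    proof -
      fix \<rho> assume \<rho>: "\<rho> \<in> \<Gamma>'"
      show "Suc m * card (Q \<rho>) \<le> card (F b0)"
      proof (cases "Q \<rho> = {}")
        case True
        then show ?thesis by simp
      next
        case False
        then obtain \<gamma>0 where g0: "\<gamma>0 \<in> Q \<rho>" by blast
        have g0G: "\<gamma>0 \<in> \<Gamma>" and g0T: "prodL \<gamma>0 bs \<in> T j \<sigma>" and g0r: "\<forall>b\<in>Bl-{b0}. \<gamma>0 b = \<rho> b"
          using g0 unfolding Q_def \<Gamma>p_def p by auto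
        have g0R: "\<forall>b\<in>set bs. \<gamma>0 b \<in> R b" using \<Gamma>R[OF g0G] .
        have g0b0: "\<gamma>0 b0 \<in> R b0" using g0R b0bs by blast
        have g0B: "\<gamma>0 b0 \<in> BC" using g0b0 R_BC by blast
        have Lg0: "Lg (prodL \<gamma>0 bs)" using LgG[OF g0G] .
        have memQ: "\<And>\<gamma>. \<gamma> \<in> Q \<rho> \<Longrightarrow> \<gamma> \<in> \<Gamma> \<and> prodL \<gamma> bs \<in> T j \<sigma> \<and> (\<forall>b\<in>Bl-{b0}. \<gamma> b = \<rho> b)"
          unfolding Q_def \<Gamma>p_def p by auto
        have eqfun: "\<And>\<gamma>. \<gamma> \<in> Q \<rho> \<Longrightarrow> \<gamma> = \<gamma>0(b0 := \<gamma> b0)"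
        proof
          fix \<gamma> x assume g: "\<gamma> \<in> Q \<rho>"
          have gG: "\<gamma> \<in> \<Gamma>" and gr: "\<forall>b\<in>Bl-{b0}. \<gamma> b = \<rho> b" using memQ[OF g] by auto
          show "\<gamma> x = (\<gamma>0(b0 := \<gamma> b0)) x"
          proof (cases "x = b0")
            case True then show ?thesis by simp
          next
            case False
            show ?thesis
            proof (cases "x \<in> Bl")
              case True
              then show ?thesis using False gr g0r by simp
            next
              case xn: False
              have "\<gamma> x = undefined" "\<gamma>0 x = undefined" using gG g0G xn unfolding \<Gamma>_def by (auto simp: PiE_iff extensional_def)
              then show ?thesis using False by simp
            qed
          qed
        qed
        have inj: "inj_on (\<lambda>\<gamma>. \<gamma> b0) (Q \<rho>)"
        proof (rule inj_onI)
          fix \<gamma> \<gamma>' assume "\<gamma> \<in> Q \<rho>" "\<gamma>' \<in> Q \<rho>" "\<gamma> b0 = \<gamma>' b0"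
          then show "\<gamma> = \<gamma>'" using eqfun by metis
        qed
        have img: "(\<lambda>\<gamma>. \<gamma> b0) ` Q \<rho> \<subseteq> F b0 \<inter> (\<gamma>0 b0 <#\<^bsub>BijGroup \<Omega>\<^esub> A j \<sigma>)"
        proof
          fix y assume "y \<in> (\<lambda>\<gamma>. \<gamma> b0) ` Q \<rho>"
          then obtain \<gamma> where g: "\<gamma> \<in> Q \<rho>" "y = \<gamma> b0" by blast
          have gG: "\<gamma> \<in> \<Gamma>" and gT: "prodL \<gamma> bs \<in> T j \<sigma>" using memQ[OF g(1)] by auto
          have yF: "y \<in> F b0" using gG b0 g(2) unfolding \<Gamma>_def by (auto simp: PiE_iff)
          have yR: "y \<in> R b0" using yF Fb0 by blast
          have yB: "y \<in> BC" using yR R_BC by blast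
          have "prodL \<gamma> bs = prodL (\<gamma>0(b0 := y)) bs" using eqfun[OF g(1)] g(2) by simp
          also have "\<dots> = prodL \<gamma>0 bs \<cdot> (iv (\<gamma>0 b0) \<cdot> y)"
            by (rule prodL_upd[OF bs(2) _ b0bs g0R yR]) (use bs(1) in simp)
          finally have T2: "prodL \<gamma>0 bs \<cdot> (iv (\<gamma>0 b0) \<cdot> y) \<in> T j \<sigma>" using gT by simp
          have dR: "iv (\<gamma>0 b0) \<cdot> y \<in> R (W \<sigma>)"
            using subgroup.m_closed[OF R_sg subgroup.m_inv_closed[OF R_sg g0b0] yR] unfolding b0_def .
          have "iv (\<gamma>0 b0) \<cdot> y \<in> A j \<sigma>" by (rule fiber[OF js Lg0 dR g0T T2])
          then have "y \<in> \<gamma>0 b0 <#\<^bsub>BijGroup \<Omega>\<^esub> A j \<sigma>" using BG.lcos_mem_iff[OF A_sg[OF js] g0B yB] by blast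
          then show "y \<in> F b0 \<inter> (\<gamma>0 b0 <#\<^bsub>BijGroup \<Omega>\<^esub> A j \<sigma>)" using yF by blast
        qed
        have "card (Q \<rho>) = card ((\<lambda>\<gamma>. \<gamma> b0) ` Q \<rho>)" using card_image[OF inj] by simp
        also have "\<dots> \<le> card (F b0 \<inter> (\<gamma>0 b0 <#\<^bsub>BijGroup \<Omega>\<^esub> A j \<sigma>))" using img Fb0(2) by (intro card_mono) auto
        finally have "Suc m * card (Q \<rho>) \<le> Suc m * card (F b0 \<inter> (\<gamma>0 b0 <#\<^bsub>BijGroup \<Omega>\<^esub> A j \<sigma>))"
          by (rule mult_le_mono2)
        also have "\<dots> \<le> card (F b0)" using Fbound g0b0 by blast
        finally show ?thesis .
      qed
    qed
    have finU: "finite (\<Union>\<rho>\<in>\<Gamma>'. Q \<rho>)" using finG' finG unfolding Q_def \<Gamma>p_def by auto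
    have "card (\<Gamma>p p) \<le> card (\<Union>\<rho>\<in>\<Gamma>'. Q \<rho>)" using sub finU by (intro card_mono)
    also have "\<dots> \<le> (\<Sum>\<rho>\<in>\<Gamma>'. card (Q \<rho>))" by (rule card_UN_le[OF finG'])
    finally have "Suc m * card (\<Gamma>p p) \<le> Suc m * (\<Sum>\<rho>\<in>\<Gamma>'. card (Q \<rho>))" by (rule mult_le_mono2)
    also have "\<dots> = (\<Sum>\<rho>\<in>\<Gamma>'. Suc m * card (Q \<rho>))" by (simp add: sum_distrib_left)
    also have "\<dots> \<le> (\<Sum>\<rho>\<in>\<Gamma>'. card (F b0))" using each by (intro sum_mono) auto
    also have "\<dots> = card \<Gamma>' * card (F b0)" by simp
    also have "\<dots> = card \<Gamma>"
    proof -
      have "card \<Gamma>' = (\<Prod>b\<in>Bl - {b0}. card (F b))" unfolding \<Gamma>'_def using finBl by (intro card_PiE) auto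
      moreover have "(\<Prod>b\<in>Bl. card (F b)) = card (F b0) * (\<Prod>b\<in>Bl - {b0}. card (F b))"
        by (rule prod.remove[OF finBl b0])
      ultimately show ?thesis using card\<Gamma> by simp
    qed
    finally show "Suc m * card (\<Gamma>p p) \<le> card \<Gamma>" .
  qed
  have "finite (\<Union>p\<in>Pc. \<Gamma>p p)" using finPc finG unfolding \<Gamma>p_def by auto
  then have "card \<Gamma> \<le> card (\<Union>p\<in>Pc. \<Gamma>p p)" using cover by (intro card_mono)
  also have "\<dots> \<le> (\<Sum>p\<in>Pc. card (\<Gamma>p p))" by (rule card_UN_le[OF finPc])
  finally have "Suc m * card \<Gamma> \<le> Suc m * (\<Sum>p\<in>Pc. card (\<Gamma>p p))" by (rule mult_le_mono2)
  also have "\<dots> = (\<Sum>p\<in>Pc. Suc m * card (\<Gamma>p p))" by (simp add: sum_distrib_left)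
  also have "\<dots> \<le> (\<Sum>p\<in>Pc. card \<Gamma>)" using bound by (intro sum_mono) auto
  also have "\<dots> = card Pc * card \<Gamma>" by simp
  also have "\<dots> \<le> m * card \<Gamma>" using cardPc by simp
  finally show False using pos by simp
qed

end

theorem theorem3p17:
  fixes \<Omega> :: "'a set" and n :: nat and H :: "nat \<Rightarrow> ('a \<Rightarrow> 'a) set"
    and G P :: "('a \<Rightarrow> 'a) set" and W :: "('a \<Rightarrow> 'a) \<Rightarrow> 'a set"
  assumes "n \<ge> 1"
    and "\<And>j. j \<in> {1..n} \<Longrightarrow> subgroup (H j) (BijGroup \<Omega>)"
    and "subgroup G (BijGroup \<Omega>)"
    and "confined_by \<Omega> n H G"
    and "confining_subset \<Omega> n H G P"
    and "displacement_configuration \<Omega> P W"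
    and "\<And>\<sigma>. \<sigma> \<in> P \<Longrightarrow> Rist \<Omega> G (W \<sigma>) \<noteq> {\<one>\<^bsub>BijGroup \<Omega>\<^esub>}"
    and "\<And>\<sigma>. \<sigma> \<in> P \<Longrightarrow> FC_le \<Omega> (n * card P) (Rist \<Omega> G (W \<sigma>)) = {\<one>\<^bsub>BijGroup \<Omega>\<^esub>}"
  shows "\<exists>\<rho>\<in>P. \<exists>k\<in>{1..n}. \<exists>N. subgroup N (BijGroup \<Omega>) \<and> N \<subseteq> H k \<and>
           N \<noteq> {\<one>\<^bsub>BijGroup \<Omega>\<^esub>} \<and> N \<subseteq> Rist \<Omega> G (W \<rho>) \<and>
           index_le \<Omega> (Rist \<Omega> G (W \<rho>)) (normalizer_in \<Omega> (Rist \<Omega> G (W \<rho>)) N) (n * card P)"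
proof -
  interpret csetup \<Omega> n H G P W
    by (rule csetup.intro) (use assms in auto)
  obtain j \<sigma> k where js: "j \<in> {1..n}" "\<sigma> \<in> P" "Lg k" "k \<in> T j \<sigma>"
    "cov_le (BijGroup \<Omega>) (Rist \<Omega> G (W \<sigma>)) (A j \<sigma>) (n * card P)"
    using exists_good by blast
  obtain N where N: "subgroup N (BijGroup \<Omega>)" "N \<subseteq> H j" "N \<noteq> {\<one>\<^bsub>BijGroup \<Omega>\<^esub>}"
    "N \<subseteq> Rist \<Omega> G (W \<sigma>)"
    "index_le \<Omega> (Rist \<Omega> G (W \<sigma>)) (normalizer_in \<Omega> (Rist \<Omega> G (W \<sigma>)) N) (n * card P)"
    using part2[OF js] by blast
  show ?thesis using js(1,2) N by blast
qed

end
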